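(* Let $\mathbf{K}$ be an algebraically closed field of arbitrary characteristic, complete with respect to a non-archimedean absolute value. Let $L$ be a line and $C$ be a nonsingular curve of degree $d\geq 3$ in $\mathbb{P}^2(\mathbf{K})$. If $L$ and $C$ intersect transversally and $L$ does not pass through any point of multiplicity $d$ of $C$, then the complement $\mathbb{P}^2(\mathbf{K})\setminus(C\cup L)$ is Brody $\mathbf{K}$-hyperbolic.
   Context: A point of multiplicity $d$ of the degree-$d$ curve $C$ means a point $P\in C$ at which the tangent line of $C$ meets $C$ with intersection multiplicity $d$. A variety $X$ over $\mathbf{K}$ is Brody $\mathbf{K}$-hyperbolic if every analytic map $f\colon\mathbf{K}\to X$ (given by entire functions on $\mathbf{K}$) is constant. *)

theory Defs
  imports "HOL-Computational_Algebra.Polynomial"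
begin

definition nonarch_abs :: "('a::field \<Rightarrow> real) \<Rightarrow> bool" where
  "nonarch_abs v \<longleftrightarrow>
     (\<forall>x. 0 \<le> v x) \<and> (\<forall>x. v x = 0 \<longleftrightarrow> x = 0) \<and>
     (\<forall>x y. v (x * y) = v x * v y) \<and>
     (\<forall>x y. v (x + y) \<le> max (v x) (v y)) \<and>
     (\<exists>x. v x \<noteq> 0 \<and> v x \<noteq> 1)"

definition v_cauchy :: "('a::field \<Rightarrow> real) \<Rightarrow> (nat \<Rightarrow> 'a) \<Rightarrow> bool" where
  "v_cauchy v s \<longleftrightarrow> (\<forall>e>0. \<exists>N. \<forall>m\<ge>N. \<forall>n\<ge>N. v (s m - s n) < e)"

definition v_tendsto :: "('a::field \<Rightarrow> real) \<Rightarrow> (nat \<Rightarrow> 'a) \<Rightarrow> 'a \<Rightarrow> bool" where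
  "v_tendsto v s l \<longleftrightarrow> ((\<lambda>n. v (s n - l)) \<longlonglongrightarrow> 0)"

definition v_complete :: "('a::field \<Rightarrow> real) \<Rightarrow> bool" where
  "v_complete v \<longleftrightarrow> (\<forall>s. v_cauchy v s \<longrightarrow> (\<exists>l. v_tendsto v s l))"

definition alg_closed_field :: "'a::field itself \<Rightarrow> bool" where
  "alg_closed_field _ \<longleftrightarrow> (\<forall>p::'a poly. 1 \<le> degree p \<longrightarrow> (\<exists>x. poly p x = 0))"

definition entire :: "('a::field \<Rightarrow> real) \<Rightarrow> ('a \<Rightarrow> 'a) \<Rightarrow> bool" where
  "entire v f \<longleftrightarrow> (\<exists>a :: nat \<Rightarrow> 'a. \<forall>z.
      v_tendsto v (\<lambda>n. \<Sum>k<n. a k * z ^ k) (f z))"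

type_synonym 'a pt = "'a \<times> 'a \<times> 'a"

definition pscale :: "'a::field \<Rightarrow> 'a pt \<Rightarrow> 'a pt" where
  "pscale c p = (c * fst p, c * fst (snd p), c * snd (snd p))"

definition padd :: "'a::field pt \<Rightarrow> 'a pt \<Rightarrow> 'a pt" where
  "padd p q = (fst p + fst q, fst (snd p) + fst (snd q), snd (snd p) + snd (snd q))"

definition pdot :: "'a::field pt \<Rightarrow> 'a pt \<Rightarrow> 'a" where
  "pdot p q = fst p * fst q + fst (snd p) * fst (snd q) + snd (snd p) * snd (snd q)"

definition proportional :: "'a::field pt \<Rightarrow> 'a pt \<Rightarrow> bool" where
  "proportional p q \<longleftrightarrow> (\<exists>c. c \<noteq> 0 \<and> q = pscale c p)"

text \<open>A form of degree d is given by coefficients c i j of the monomial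
  x0^i x1^j x2^(d-i-j), for i + j \<le> d (other values of c are irrelevant).\<close>

definition hp_eval :: "nat \<Rightarrow> (nat \<Rightarrow> nat \<Rightarrow> 'a::field) \<Rightarrow> 'a pt \<Rightarrow> 'a" where
  "hp_eval d c p = (case p of (x0, x1, x2) \<Rightarrow>
     (\<Sum>i\<le>d. \<Sum>j\<le>d-i. c i j * x0 ^ i * x1 ^ j * x2 ^ (d-i-j)))"

definition hp_d0 :: "nat \<Rightarrow> (nat \<Rightarrow> nat \<Rightarrow> 'a::field) \<Rightarrow> 'a pt \<Rightarrow> 'a" where
  "hp_d0 d c p = (case p of (x0, x1, x2) \<Rightarrow>
     (\<Sum>i\<le>d. \<Sum>j\<le>d-i. c i j * of_nat i * x0 ^ (i-1) * x1 ^ j * x2 ^ (d-i-j)))"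

definition hp_d1 :: "nat \<Rightarrow> (nat \<Rightarrow> nat \<Rightarrow> 'a::field) \<Rightarrow> 'a pt \<Rightarrow> 'a" where
  "hp_d1 d c p = (case p of (x0, x1, x2) \<Rightarrow>
     (\<Sum>i\<le>d. \<Sum>j\<le>d-i. c i j * x0 ^ i * of_nat j * x1 ^ (j-1) * x2 ^ (d-i-j)))"

definition hp_d2 :: "nat \<Rightarrow> (nat \<Rightarrow> nat \<Rightarrow> 'a::field) \<Rightarrow> 'a pt \<Rightarrow> 'a" where
  "hp_d2 d c p = (case p of (x0, x1, x2) \<Rightarrow>
     (\<Sum>i\<le>d. \<Sum>j\<le>d-i. c i j * x0 ^ i * x1 ^ j * of_nat (d-i-j) * x2 ^ (d-i-j-1)))"

definition hp_grad :: "nat \<Rightarrow> (nat \<Rightarrow> nat \<Rightarrow> 'a::field) \<Rightarrow> 'a pt \<Rightarrow> 'a pt" where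
  "hp_grad d c p = (hp_d0 d c p, hp_d1 d c p, hp_d2 d c p)"

definition nonsingular_curve :: "nat \<Rightarrow> (nat \<Rightarrow> nat \<Rightarrow> 'a::field) \<Rightarrow> bool" where
  "nonsingular_curve d c \<longleftrightarrow>
     (\<forall>p. p \<noteq> (0,0,0) \<longrightarrow> hp_eval d c p = 0 \<longrightarrow> hp_grad d c p \<noteq> (0,0,0))"

text \<open>Line L = {a . x = 0} (a \<noteq> 0) meets C transversally: at every common point
  the tangent line of C (with equation grad F(P) . x = 0) differs from L.\<close>
definition transversal :: "nat \<Rightarrow> (nat \<Rightarrow> nat \<Rightarrow> 'a::field) \<Rightarrow> 'a pt \<Rightarrow> bool" where
  "transversal d c a \<longleftrightarrow>
     (\<forall>p. p \<noteq> (0,0,0) \<longrightarrow> hp_eval d c p = 0 \<longrightarrow> pdot a p = 0 \<longrightarrow>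
        \<not> proportional a (hp_grad d c p))"

text \<open>P is a point of multiplicity d of C: the tangent line T_P meets C at P
  with intersection multiplicity d, i.e. for a point Q of T_P off C, the
  restriction of F to T_P, (x,y) \<mapsto> F(xP + yQ), equals F(Q) y^d with F(Q) \<noteq> 0.\<close>
definition mult_d_point :: "nat \<Rightarrow> (nat \<Rightarrow> nat \<Rightarrow> 'a::field) \<Rightarrow> 'a pt \<Rightarrow> bool" where
  "mult_d_point d c p \<longleftrightarrow> p \<noteq> (0,0,0) \<and> hp_eval d c p = 0 \<and>
     (\<exists>q. pdot (hp_grad d c p) q = 0 \<and> hp_eval d c q \<noteq> 0 \<and>
        (\<forall>x y. hp_eval d c (padd (pscale x p) (pscale y q)) = y ^ d * hp_eval d c q))"

text \<open>Brody K-hyperbolicity of the complement P^2 \ (C \<union> L): every analytic map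
  K \<rightarrow> P^2, given by entire functions f0, f1, f2 without common zeros, with image
  in the complement, is constant.\<close>
definition brody_hyperbolic_complement ::
    "('a::field \<Rightarrow> real) \<Rightarrow> nat \<Rightarrow> (nat \<Rightarrow> nat \<Rightarrow> 'a) \<Rightarrow> 'a pt \<Rightarrow> bool" where
  "brody_hyperbolic_complement v d c a \<longleftrightarrow>
     (\<forall>f0 f1 f2. entire v f0 \<longrightarrow> entire v f1 \<longrightarrow> entire v f2 \<longrightarrow>
        (\<forall>z. (f0 z, f1 z, f2 z) \<noteq> (0,0,0)) \<longrightarrow>
        (\<forall>z. hp_eval d c (f0 z, f1 z, f2 z) \<noteq> 0 \<and> pdot a (f0 z, f1 z, f2 z) \<noteq> 0) \<longrightarrow>
        (\<forall>z w. proportional (f0 z, f1 z, f2 z) (f0 w, f1 w, f2 w)))"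

end

theory Submission
  imports Defs
begin


locale NA =
  fixes v :: "'a::field \<Rightarrow> real"
  assumes na: "nonarch_abs v"
begin

lemma v_nonneg[simp]: "0 \<le> v x" using na unfolding nonarch_abs_def by blast
lemma v_zero_iff[simp]: "v x = 0 \<longleftrightarrow> x = 0" using na unfolding nonarch_abs_def by blast
lemma v_mult: "v (x * y) = v x * v y" using na unfolding nonarch_abs_def by blast
lemma v_add: "v (x + y) \<le> max (v x) (v y)" using na unfolding nonarch_abs_def by blast
lemma v_0[simp]: "v 0 = 0" by simp
lemma v_pos[simp]: "0 < v x \<longleftrightarrow> x \<noteq> 0" using v_nonneg[of x] v_zero_iff[of x] by linarith
lemma v_1[simp]: "v 1 = 1"
proof -
  have "v 1 = v 1 * v 1" using v_mult[of 1 1] by simp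
  moreover have "v 1 \<noteq> 0" by simp
  ultimately show ?thesis by (metis mult_cancel_left1)
qed
lemma v_minus1: "v (-1) = 1"
proof -
  have "v (-1) * v (-1) = 1" using v_mult[of "-1" "-1"] by simp
  moreover have "v (-1) \<ge> 0" by simp
  ultimately show ?thesis by (metis abs_of_nonneg abs_square_eq_1 power2_eq_square)
qed
lemma v_uminus[simp]: "v (- x) = v x"
  using v_mult[of "-1" x] v_minus1 by simp
lemma v_commute: "v (x - y) = v (y - x)"
  by (metis minus_diff_eq v_uminus)
lemma v_diff: "v (x - y) \<le> max (v x) (v y)"
  using v_add[of x "-y"] by simp
lemma v_power: "v (x ^ n) = v x ^ n"
  by (induction n) (auto simp: v_mult)
lemma v_inverse: "x \<noteq> 0 \<Longrightarrow> v (inverse x) = inverse (v x)"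
  using v_mult[of x "inverse x"] by (simp add: field_simps)
lemma v_divide: "v (x / y) = v x / v y"
  by (cases "y = 0") (auto simp: divide_inverse v_mult v_inverse)
lemma v_add_le: "v x \<le> B \<Longrightarrow> v y \<le> B \<Longrightarrow> v (x + y) \<le> B"
  using v_add[of x y] by linarith
lemma v_diff_le: "v x \<le> B \<Longrightarrow> v y \<le> B \<Longrightarrow> v (x - y) \<le> B"
  using v_diff[of x y] by linarith
lemma v_add_lt: "v x < B \<Longrightarrow> v y < B \<Longrightarrow> v (x + y) < B"
  using v_add[of x y] by linarith
lemma v_add_strict: assumes "v y < v x" shows "v (x + y) = v x"
proof -
  have "v x \<le> max (v (x + y)) (v y)" using v_diff[of "x+y" y] by simp
  hence "v x \<le> v (x + y)" using assms by linarith
  moreover have "v (x + y) \<le> v x" using v_add[of x y] assms by linarith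
  ultimately show ?thesis by linarith
qed
lemma v_diff_strict: assumes "v y < v x" shows "v (x - y) = v x"
  using v_add_strict[of "-y" x] assms by simp
lemma v_sum_le: "(\<And>i. i \<in> S \<Longrightarrow> v (g i) \<le> B) \<Longrightarrow> 0 \<le> B \<Longrightarrow> v (sum g S) \<le> B"
proof (induction S rule: infinite_finite_induct)
  case (insert x F) then show ?case by (auto intro!: v_add_le)
qed auto
lemma v_sum_lt: "finite S \<Longrightarrow> (\<And>i. i \<in> S \<Longrightarrow> v (g i) < B) \<Longrightarrow> 0 < B \<Longrightarrow> v (sum g S) < B"
proof (induction S rule: finite_induct)
  case (insert x F) then show ?case by (auto intro!: v_add_lt)
qed auto
lemma v_prod: "v (prod g S) = (\<Prod>i\<in>S. v (g i))"
  by (induction S rule: infinite_finite_induct) (auto simp: v_mult)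
lemma v_of_nat: "v (of_nat n) \<le> 1"
  by (induction n) (auto intro!: v_add_le)

lemma exists_big: "\<exists>x. v x > 1"
proof -
  obtain x where x: "v x \<noteq> 0" "v x \<noteq> 1" using na unfolding nonarch_abs_def by blast
  show ?thesis
  proof (cases "v x > 1")
    case False
    hence "v x < 1" using x by simp
    hence "v (inverse x) > 1" using x by (simp add: v_inverse one_less_inverse)
    then show ?thesis by blast
  qed blast
qed

lemma exists_ge: "\<exists>z. v z \<ge> R"
proof -
  obtain x where x: "v x > 1" using exists_big by blast
  obtain n where "R < v x ^ n" using real_arch_pow[OF x] by blast
  thus ?thesis by (metis less_le v_power)
qed

lemma exists_small: "0 < e \<Longrightarrow> \<exists>z. z \<noteq> 0 \<and> v z < e"
proof -
  assume e: "0 < e"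
  obtain z where z: "v z \<ge> 2 / e" using exists_ge by blast
  hence "z \<noteq> 0" using e by (auto simp: field_simps)
  hence "v (inverse z) = inverse (v z)" by (simp add: v_inverse)
  moreover have "inverse (v z) < e"
  proof -
    have "v z > 0" using \<open>z \<noteq> 0\<close> by simp
    have "1 / e < v z" using z e by (smt (verit) divide_less_cancel)
    thus ?thesis using \<open>v z > 0\<close> e by (simp add: field_simps)
  qed
  ultimately show ?thesis using \<open>z \<noteq> 0\<close> by (metis inverse_nonzero_iff_nonzero)
qed

lemma infinite_UNIV_field: "infinite (UNIV :: 'a set)"
proof
  assume f: "finite (UNIV :: 'a set)"
  obtain x :: 'a where x: "v x > 1" using exists_big by blast
  have "finite (range (\<lambda>n. x ^ n))" using f by (rule finite_subset[rotated]) auto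
  moreover have "inj (\<lambda>n. x ^ n)"
  proof (rule injI)
    fix m n assume "x ^ m = x ^ n"
    hence "v x ^ m = v x ^ n" by (simp add: v_power[symmetric])
    thus "m = n" using x by (simp add: power_inject_exp)
  qed
  ultimately show False by (simp add: finite_image_iff)
qed

end


context NA begin

definition psum :: "(nat \<Rightarrow> 'a) \<Rightarrow> 'a \<Rightarrow> nat \<Rightarrow> 'a" where
  "psum a z n = (\<Sum>k<n. a k * z ^ k)"

definition vc :: "(nat \<Rightarrow> 'a) \<Rightarrow> bool" where
  "vc a \<longleftrightarrow> (\<forall>r>0. \<forall>e>0. \<exists>N. \<forall>k\<ge>N. v (a k) * r ^ k < e)"

definition rep :: "(nat \<Rightarrow> 'a) \<Rightarrow> ('a \<Rightarrow> 'a) \<Rightarrow> bool" where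
  "rep a f \<longleftrightarrow> vc a \<and> (\<forall>z. v_tendsto v (psum a z) (f z))"

definition ent :: "('a \<Rightarrow> 'a) \<Rightarrow> bool" where
  "ent f \<longleftrightarrow> (\<exists>a. rep a f)"

lemma vt_iff: "v_tendsto v s l \<longleftrightarrow> (\<forall>e>0. \<exists>N. \<forall>n\<ge>N. v (s n - l) < e)"
  unfolding v_tendsto_def lim_sequentially by (simp add: dist_real_def)

lemma vt_unique: assumes "v_tendsto v s l1" "v_tendsto v s l2" shows "l1 = l2"
proof (rule ccontr)
  assume ne: "l1 \<noteq> l2"
  define e where "e = v (l1 - l2)"
  have e: "e > 0" using ne by (simp add: e_def)
  obtain N1 where N1: "\<forall>n\<ge>N1. v (s n - l1) < e" using assms(1) e unfolding vt_iff by blast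
  obtain N2 where N2: "\<forall>n\<ge>N2. v (s n - l2) < e" using assms(2) e unfolding vt_iff by blast
  have "l1 - l2 = (s (N1+N2) - l2) - (s (N1+N2) - l1)" by simp
  moreover have "v (s (N1+N2) - l2) < e" "v (s (N1+N2) - l1) < e" using N1 N2 by auto
  ultimately have "v (l1 - l2) < e"
    using v_diff[of "s (N1+N2) - l2" "s (N1+N2) - l1"] by (auto simp: max_def split: if_splits)
  thus False by (simp add: e_def)
qed

lemma frac_lt1: "0 < (e::real) \<Longrightarrow> 0 \<le> B \<Longrightarrow> B * (e / (B + 1)) < e"
  by (simp add: field_simps)
lemma frac_lt2: "0 < (e::real) \<Longrightarrow> 0 \<le> B \<Longrightarrow> (e / (B + 1)) * B < e"
  by (simp add: field_simps)
lemma frac_pos: "0 < (e::real) \<Longrightarrow> 0 \<le> B \<Longrightarrow> 0 < e / (B + 1)"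
  by simp

lemma vt_const: "v_tendsto v (\<lambda>n. c) c"
  unfolding vt_iff by auto

lemma vt_eventually: assumes "\<forall>n\<ge>N. s n = c" shows "v_tendsto v s c"
  unfolding vt_iff using assms by (intro allI impI exI[of _ N]) auto

lemma vt_add: assumes "v_tendsto v s l" "v_tendsto v t m"
  shows "v_tendsto v (\<lambda>n. s n + t n) (l + m)"
  unfolding vt_iff
proof (intro allI impI)
  fix e :: real assume e: "e > 0"
  obtain N1 where N1: "\<forall>n\<ge>N1. v (s n - l) < e" using assms(1) e unfolding vt_iff by blast
  obtain N2 where N2: "\<forall>n\<ge>N2. v (t n - m) < e" using assms(2) e unfolding vt_iff by blast
  have "v (s n + t n - (l + m)) < e" if "n \<ge> N1 + N2" for n
  proof -
    have eq: "s n + t n - (l + m) = (s n - l) + (t n - m)" by simp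
    show ?thesis unfolding eq using N1 N2 that by (intro v_add_lt) auto
  qed
  thus "\<exists>N. \<forall>n\<ge>N. v (s n + t n - (l + m)) < e" by blast
qed

lemma vt_cmult: assumes "v_tendsto v s l"
  shows "v_tendsto v (\<lambda>n. c * s n) (c * l)"
  unfolding vt_iff
proof (intro allI impI)
  fix e :: real assume e: "e > 0"
  obtain N where N: "\<forall>n\<ge>N. v (s n - l) < e / (v c + 1)"
    using assms e unfolding vt_iff by (metis add_nonneg_pos divide_pos_pos v_nonneg zero_less_one)
  have "v (c * s n - c * l) < e" if "n \<ge> N" for n
  proof -
    have "v (c * s n - c * l) = v c * v (s n - l)" by (simp add: v_mult right_diff_distrib[symmetric])
    also have "\<dots> \<le> v c * (e / (v c + 1))" using N that by (intro mult_left_mono) auto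
    also have "\<dots> < e" using e by (intro frac_lt1) auto
    finally show ?thesis .
  qed
  thus "\<exists>N. \<forall>n\<ge>N. v (c * s n - c * l) < e" by blast
qed

lemma vt_bounded: assumes "v_tendsto v s l" shows "\<exists>B\<ge>0. \<forall>n. v (s n) \<le> B"
proof -
  obtain N where N: "\<forall>n\<ge>N. v (s n - l) < 1" using assms unfolding vt_iff by fastforce
  define B where "B = max (v l) 1 + (\<Sum>n<N. v (s n))"
  have B0: "B \<ge> 0" unfolding B_def by (intro add_nonneg_nonneg sum_nonneg) auto
  have "v (s n) \<le> B" for n
  proof (cases "n < N")
    case True
    have "v (s n) \<le> (\<Sum>n<N. v (s n))" using True by (intro member_le_sum) auto
    thus ?thesis unfolding B_def by linarith
  next
    case False
    have "s n = (s n - l) + l" by simp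
    hence "v (s n) \<le> max (v (s n - l)) (v l)" by (metis v_add)
    moreover have "v (s n - l) < 1" using N False by simp
    ultimately have "v (s n) \<le> max (v l) 1" by (auto simp: max_def split: if_splits)
    moreover have "0 \<le> (\<Sum>n<N. v (s n))" by (intro sum_nonneg) auto
    ultimately show ?thesis unfolding B_def by linarith
  qed
  thus ?thesis using B0 by blast
qed

lemma vt_mult: assumes "v_tendsto v s l" "v_tendsto v t m"
  shows "v_tendsto v (\<lambda>n. s n * t n) (l * m)"
proof -
  obtain B where B: "B \<ge> 0" "\<forall>n. v (t n) \<le> B" using vt_bounded[OF assms(2)] by blast
  show ?thesis unfolding vt_iff
  proof (intro allI impI)
    fix e :: real assume e: "e > 0"
    obtain N1 where N1: "\<forall>n\<ge>N1. v (s n - l) < e / (B + 1)"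
      using assms(1) e B unfolding vt_iff by (metis add_nonneg_pos divide_pos_pos zero_less_one)
    obtain N2 where N2: "\<forall>n\<ge>N2. v (t n - m) < e / (v l + 1)"
      using assms(2) e unfolding vt_iff by (metis add_nonneg_pos divide_pos_pos v_nonneg zero_less_one)
    have "v (s n * t n - l * m) < e" if "n \<ge> N1 + N2" for n
    proof -
      have eq: "s n * t n - l * m = (s n - l) * t n + l * (t n - m)" by (simp add: algebra_simps)
      have "v ((s n - l) * t n) = v (s n - l) * v (t n)" by (simp add: v_mult)
      also have "\<dots> \<le> (e / (B + 1)) * B" using N1 B that e
        by (intro mult_mono) (auto intro: less_imp_le)
      also have "\<dots> < e" using e B by (intro frac_lt2) auto
      finally have 1: "v ((s n - l) * t n) < e" .
      have "v (l * (t n - m)) = v l * v (t n - m)" by (simp add: v_mult)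
      also have "\<dots> \<le> v l * (e / (v l + 1))" using N2 that by (intro mult_left_mono) (auto intro: less_imp_le)
      also have "\<dots> < e" using e by (intro frac_lt1) auto
      finally have 2: "v (l * (t n - m)) < e" .
      show ?thesis unfolding eq using 1 2 by (rule v_add_lt)
    qed
    thus "\<exists>N. \<forall>n\<ge>N. v (s n * t n - l * m) < e" by blast
  qed
qed

lemma vc_bounded: assumes "vc a" "r > 0" shows "\<exists>B\<ge>0. \<forall>k. v (a k) * r ^ k \<le> B"
proof -
  obtain N where N: "\<forall>k\<ge>N. v (a k) * r ^ k < 1" using assms unfolding vc_def by fastforce
  define B where "B = 1 + (\<Sum>k<N. v (a k) * r ^ k)"
  have s0: "0 \<le> (\<Sum>k<N. v (a k) * r ^ k)" using assms(2) by (intro sum_nonneg) auto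
  have "v (a k) * r ^ k \<le> B" for k
  proof (cases "k < N")
    case True
    have "v (a k) * r ^ k \<le> (\<Sum>k<N. v (a k) * r ^ k)" using True assms(2) by (intro member_le_sum) auto
    thus ?thesis unfolding B_def by linarith
  next
    case False
    hence "v (a k) * r ^ k < 1" using N by simp
    thus ?thesis using s0 unfolding B_def by linarith
  qed
  moreover have "B \<ge> 0" using s0 unfolding B_def by linarith
  ultimately show ?thesis by blast
qed

lemma entire_imp_vc:
  assumes "\<forall>z. v_tendsto v (psum a z) (f z)" shows "vc a"
  unfolding vc_def
proof (intro allI impI)
  fix r e :: real assume r: "r > 0" and e: "e > 0"
  obtain z where z: "v z \<ge> r" using exists_ge by blast
  obtain N where N: "\<forall>n\<ge>N. v (psum a z n - f z) < e" using assms e unfolding vt_iff by blast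
  have "v (a k) * r ^ k < e" if "k \<ge> N" for k
  proof -
    have "psum a z (Suc k) - psum a z k = (psum a z (Suc k) - f z) - (psum a z k - f z)" by simp
    moreover have "psum a z (Suc k) - psum a z k = a k * z ^ k" by (simp add: psum_def)
    ultimately have "v (a k * z ^ k) < e" using N that
      by (metis le_SucI v_diff le_less_trans max_less_iff_conj)
    hence "v (a k) * v z ^ k < e" by (simp add: v_mult v_power)
    moreover have "v (a k) * r ^ k \<le> v (a k) * v z ^ k"
      using z r by (intro mult_left_mono power_mono) auto
    ultimately show ?thesis by linarith
  qed
  thus "\<exists>N. \<forall>k\<ge>N. v (a k) * r ^ k < e" by blast
qed

lemma entire_iff_ent: "entire v f \<longleftrightarrow> ent f"
proof
  assume "entire v f"
  then obtain a where a: "\<forall>z. v_tendsto v (\<lambda>n. \<Sum>k<n. a k * z ^ k) (f z)"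
    unfolding entire_def by blast
  hence "\<forall>z. v_tendsto v (psum a z) (f z)" unfolding psum_def by simp
  thus "ent f" unfolding ent_def rep_def using entire_imp_vc by blast
next
  assume "ent f"
  then obtain a where "\<forall>z. v_tendsto v (psum a z) (f z)" unfolding ent_def rep_def by blast
  thus "entire v f" unfolding entire_def psum_def by blast
qed

lemma psum_sum_cong: "psum a z n = (\<Sum>k<n. a k * z ^ k)" by (simp add: psum_def)

lemma rep_const: "rep (\<lambda>k. if k = 0 then c else 0) (\<lambda>z. c)"
  unfolding rep_def
proof
  show "vc (\<lambda>k. if k = 0 then c else 0)" unfolding vc_def
    by (intro allI impI exI[of _ 1]) auto
  show "\<forall>z. v_tendsto v (psum (\<lambda>k. if k = 0 then c else 0) z) c"
  proof
    fix z
    have "psum (\<lambda>k. if k = 0 then c else 0) z n = c" if "n \<ge> 1" for n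
    proof -
      have "psum (\<lambda>k. if k = 0 then c else 0) z n = (\<Sum>k\<in>{..<n}. if k = 0 then c else 0)"
        unfolding psum_def by (intro sum.cong) auto
      also have "\<dots> = c" using that by (subst sum.delta) auto
      finally show ?thesis .
    qed
    thus "v_tendsto v (psum (\<lambda>k. if k = 0 then c else 0) z) c" by (intro vt_eventually) auto
  qed
qed

lemma rep_add: assumes "rep a f" "rep b g" shows "rep (\<lambda>k. a k + b k) (\<lambda>z. f z + g z)"
  unfolding rep_def
proof
  show "vc (\<lambda>k. a k + b k)" unfolding vc_def
  proof (intro allI impI)
    fix r e :: real assume r: "r > 0" and e: "e > 0"
    obtain N1 where N1: "\<forall>k\<ge>N1. v (a k) * r ^ k < e" using assms r e unfolding rep_def vc_def by blast
    obtain N2 where N2: "\<forall>k\<ge>N2. v (b k) * r ^ k < e" using assms r e unfolding rep_def vc_def by blast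
    have "v (a k + b k) * r ^ k < e" if "k \<ge> N1 + N2" for k
    proof -
      have "v (a k + b k) * r ^ k \<le> max (v (a k)) (v (b k)) * r ^ k"
        using r by (intro mult_right_mono v_add) auto
      also have "\<dots> = max (v (a k) * r ^ k) (v (b k) * r ^ k)" using r by (simp add: max_mult_distrib_right)
      also have "\<dots> < e" using N1 N2 that by auto
      finally show ?thesis .
    qed
    thus "\<exists>N. \<forall>k\<ge>N. v (a k + b k) * r ^ k < e" by blast
  qed
  show "\<forall>z. v_tendsto v (psum (\<lambda>k. a k + b k) z) (f z + g z)"
  proof
    fix z
    have "psum (\<lambda>k. a k + b k) z = (\<lambda>n. psum a z n + psum b z n)"
      by (auto simp: psum_def distrib_right sum.distrib)
    thus "v_tendsto v (psum (\<lambda>k. a k + b k) z) (f z + g z)"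
      using assms unfolding rep_def by (auto intro: vt_add)
  qed
qed

lemma rep_cmult: assumes "rep a f" shows "rep (\<lambda>k. c * a k) (\<lambda>z. c * f z)"
  unfolding rep_def
proof
  show "vc (\<lambda>k. c * a k)" unfolding vc_def
  proof (intro allI impI)
    fix r e :: real assume r: "r > 0" and e: "e > 0"
    obtain N where N: "\<forall>k\<ge>N. v (a k) * r ^ k < e / (v c + 1)"
      using assms r e unfolding rep_def vc_def by (metis add_nonneg_pos divide_pos_pos v_nonneg zero_less_one)
    have "v (c * a k) * r ^ k < e" if "k \<ge> N" for k
    proof -
      have "v (c * a k) * r ^ k = v c * (v (a k) * r ^ k)" by (simp add: v_mult)
      also have "\<dots> \<le> v c * (e / (v c + 1))" using N that by (intro mult_left_mono) (auto intro: less_imp_le)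
      also have "\<dots> < e" using e by (intro frac_lt1) auto
      finally show ?thesis .
    qed
    thus "\<exists>N. \<forall>k\<ge>N. v (c * a k) * r ^ k < e" by blast
  qed
  show "\<forall>z. v_tendsto v (psum (\<lambda>k. c * a k) z) (c * f z)"
  proof
    fix z
    have "psum (\<lambda>k. c * a k) z = (\<lambda>n. c * psum a z n)"
      by (auto simp: psum_def sum_distrib_left mult.assoc)
    thus "v_tendsto v (psum (\<lambda>k. c * a k) z) (c * f z)"
      using assms unfolding rep_def by (auto intro: vt_cmult)
  qed
qed

definition cp :: "(nat \<Rightarrow> 'a) \<Rightarrow> (nat \<Rightarrow> 'a) \<Rightarrow> nat \<Rightarrow> 'a" where
  "cp a b n = (\<Sum>i\<le>n. a i * b (n - i))"

lemma prod_small: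
  assumes "vc a" "vc b" "r > 0" "e > 0"
  shows "\<exists>N1 N2. \<forall>i j. (i \<ge> N1 \<or> j \<ge> N2) \<longrightarrow> (v (a i) * r ^ i) * (v (b j) * r ^ j) < e"
proof -
  obtain A where A: "A \<ge> 0" "\<forall>k. v (a k) * r ^ k \<le> A" using vc_bounded[OF assms(1,3)] by blast
  obtain B where B: "B \<ge> 0" "\<forall>k. v (b k) * r ^ k \<le> B" using vc_bounded[OF assms(2,3)] by blast
  obtain N1 where N1: "\<forall>k\<ge>N1. v (a k) * r ^ k < e / (B + 1)"
    using assms B unfolding vc_def by (metis add_nonneg_pos divide_pos_pos zero_less_one)
  obtain N2 where N2: "\<forall>k\<ge>N2. v (b k) * r ^ k < e / (A + 1)"
    using assms A unfolding vc_def by (metis add_nonneg_pos divide_pos_pos zero_less_one)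
  have "(v (a i) * r ^ i) * (v (b j) * r ^ j) < e" if "i \<ge> N1 \<or> j \<ge> N2" for i j
  proof -
    have ai: "0 \<le> v (a i) * r ^ i" and bj: "0 \<le> v (b j) * r ^ j" using assms(3) by auto
    show ?thesis
    proof (cases "i \<ge> N1")
      case True
      have "(v (a i) * r ^ i) * (v (b j) * r ^ j) \<le> (e / (B + 1)) * B"
        using N1 True B bj assms(4) by (intro mult_mono) (auto intro: less_imp_le)
      also have "\<dots> < e" using B assms(4) by (intro frac_lt2) auto
      finally show ?thesis .
    next
      case False
      hence "j \<ge> N2" using that by auto
      have "(v (a i) * r ^ i) * (v (b j) * r ^ j) \<le> A * (e / (A + 1))"
        using N2 \<open>j \<ge> N2\<close> A ai bj by (intro mult_mono) (auto intro: less_imp_le)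
      also have "\<dots> < e" using A assms(4) by (intro frac_lt1) auto
      finally show ?thesis .
    qed
  qed
  thus ?thesis by blast
qed

lemma vc_cp: assumes "vc a" "vc b" shows "vc (cp a b)"
  unfolding vc_def
proof (intro allI impI)
  fix r e :: real assume r: "r > 0" and e: "e > 0"
  obtain N1 N2 where N: "\<forall>i j. (i \<ge> N1 \<or> j \<ge> N2) \<longrightarrow> (v (a i) * r ^ i) * (v (b j) * r ^ j) < e"
    using prod_small[OF assms r e] by blast
  have "v (cp a b n) * r ^ n < e" if "n \<ge> N1 + N2" for n
  proof -
    have rn: "r ^ n > 0" using r by simp
    have "v (cp a b n) < e / r ^ n" unfolding cp_def
    proof (rule v_sum_lt)
      fix i assume i: "i \<in> {..n}"
      have "v (a i * b (n - i)) * r ^ n = (v (a i) * r ^ i) * (v (b (n - i)) * r ^ (n - i))"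
        using i by (simp add: v_mult power_add[symmetric] algebra_simps)
      also have "\<dots> < e" using N that by (intro N[rule_format]) linarith
      finally show "v (a i * b (n - i)) < e / r ^ n" using rn by (simp add: field_simps)
    qed (use e rn in auto)
    thus ?thesis using rn by (simp add: field_simps)
  qed
  thus "\<exists>N. \<forall>k\<ge>N. v (cp a b k) * r ^ k < e" by blast
qed

lemma psum_cp: "psum (cp a b) z n = (\<Sum>(i,j)\<in>{(i,j). i+j < n}. (a i * z ^ i) * (b j * z ^ j))"
proof -
  have "psum (cp a b) z n = (\<Sum>k<n. \<Sum>i\<le>k. (a i * z ^ i) * (b (k - i) * z ^ (k - i)))"
    unfolding psum_def cp_def sum_distrib_right
    by (intro sum.cong refl) (auto simp: power_add[symmetric] algebra_simps)
  also have "\<dots> = (\<Sum>(i,j)\<in>{(i,j). i+j < n}. (a i * z ^ i) * (b j * z ^ j))"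
    by (rule sum.triangle_reindex[symmetric])
  finally show ?thesis .
qed

lemma psum_prod: "psum a z n * psum b z n = (\<Sum>(i,j)\<in>{..<n}\<times>{..<n}. (a i * z ^ i) * (b j * z ^ j))"
  unfolding psum_def sum_product sum.cartesian_product by simp

lemma rep_mult: assumes "rep a f" "rep b g" shows "rep (cp a b) (\<lambda>z. f z * g z)"
  unfolding rep_def
proof
  have va: "vc a" and vb: "vc b" using assms unfolding rep_def by auto
  show "vc (cp a b)" using vc_cp[OF va vb] .
  show "\<forall>z. v_tendsto v (psum (cp a b) z) (f z * g z)"
  proof
    fix z
    have pp: "v_tendsto v (\<lambda>n. psum a z n * psum b z n) (f z * g z)"
      using assms unfolding rep_def by (auto intro: vt_mult)
    define r where "r = v z + 1"
    have r: "r > 0" "v z \<le> r" unfolding r_def using v_nonneg[of z] by linarith+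
    have small: "v_tendsto v (\<lambda>n. psum (cp a b) z n - psum a z n * psum b z n) 0"
      unfolding vt_iff
    proof (intro allI impI)
      fix e :: real assume e: "e > 0"
      obtain N1 N2 where N: "\<forall>i j. (i \<ge> N1 \<or> j \<ge> N2) \<longrightarrow> (v (a i) * r ^ i) * (v (b j) * r ^ j) < e"
        using prod_small[OF va vb r(1) e] by blast
      have "v (psum (cp a b) z n - psum a z n * psum b z n - 0) < e" if n: "n \<ge> N1 + N2" for n
      proof -
        define T where "T = {(i,j). i + j < n}"
        define Q where "Q = {..<n} \<times> {..<n}"
        have TQ: "T \<subseteq> Q" "finite Q" unfolding T_def Q_def by auto
        define h where "h = (\<lambda>(i,j). (a i * z ^ i) * (b j * z ^ j))"
        have "psum (cp a b) z n - psum a z n * psum b z n = sum h T - sum h Q"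
          unfolding psum_cp psum_prod T_def Q_def h_def by simp
        also have "\<dots> = - sum h (Q - T)" using sum.subset_diff[OF TQ, of h] by simp
        finally have eq: "psum (cp a b) z n - psum a z n * psum b z n = - sum h (Q - T)" .
        have "v (sum h (Q - T)) < e"
        proof (rule v_sum_lt)
          fix p assume p: "p \<in> Q - T"
          obtain i j where ij: "p = (i, j)" by fastforce
          have "i + j \<ge> n" using p ij unfolding T_def by auto
          hence "i \<ge> N1 \<or> j \<ge> N2" using n by linarith
          hence lt: "(v (a i) * r ^ i) * (v (b j) * r ^ j) < e" using N by blast
          have "v (h p) = (v (a i) * v z ^ i) * (v (b j) * v z ^ j)"
            unfolding ij h_def by (simp add: v_mult v_power)
          also have "\<dots> \<le> (v (a i) * r ^ i) * (v (b j) * r ^ j)"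
            using r by (intro mult_mono mult_left_mono power_mono) auto
          finally show "v (h p) < e" using lt by linarith
        qed (use TQ e in auto)
        thus ?thesis using eq by simp
      qed
      thus "\<exists>N. \<forall>n\<ge>N. v (psum (cp a b) z n - psum a z n * psum b z n - 0) < e" by blast
    qed
    have "v_tendsto v (\<lambda>n. (psum (cp a b) z n - psum a z n * psum b z n) + psum a z n * psum b z n) (0 + f z * g z)"
      by (rule vt_add[OF small pp])
    thus "v_tendsto v (psum (cp a b) z) (f z * g z)" by simp
  qed
qed

lemma ent_const[simp, intro]: "ent (\<lambda>z. c)" unfolding ent_def using rep_const by blast
lemma ent_add[intro]: "ent f \<Longrightarrow> ent g \<Longrightarrow> ent (\<lambda>z. f z + g z)" unfolding ent_def using rep_add by blast
lemma ent_mult[intro]: "ent f \<Longrightarrow> ent g \<Longrightarrow> ent (\<lambda>z. f z * g z)" unfolding ent_def using rep_mult by blast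
lemma ent_cmult[intro]: "ent f \<Longrightarrow> ent (\<lambda>z. c * f z)" unfolding ent_def using rep_cmult by blast
lemma ent_uminus[intro]: "ent f \<Longrightarrow> ent (\<lambda>z. - f z)" using ent_cmult[of f "-1"] by simp
lemma ent_diff[intro]: "ent f \<Longrightarrow> ent g \<Longrightarrow> ent (\<lambda>z. f z - g z)"
  using ent_add[of f "\<lambda>z. - g z"] ent_uminus[of g] by simp
lemma ent_id[intro]: "ent (\<lambda>z. z)"
proof -
  have "rep (\<lambda>k. if k = 1 then 1 else 0) (\<lambda>z. z)"
    unfolding rep_def
  proof
    show "vc (\<lambda>k. if k = 1 then 1 else 0)" unfolding vc_def by (intro allI impI exI[of _ 2]) auto
    show "\<forall>z. v_tendsto v (psum (\<lambda>k. if k = 1 then 1 else 0) z) z"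
    proof
      fix z
      have "psum (\<lambda>k. if k = 1 then 1 else 0) z n = z" if "n \<ge> 2" for n
      proof -
        have "psum (\<lambda>k. if k = 1 then 1 else 0) z n = (\<Sum>k\<in>{..<n}. if k = 1 then z else 0)"
          unfolding psum_def by (intro sum.cong) auto
        also have "\<dots> = z" using that by (subst sum.delta) auto
        finally show ?thesis .
      qed
      thus "v_tendsto v (psum (\<lambda>k. if k = 1 then 1 else 0) z) z" by (intro vt_eventually) auto
    qed
  qed
  thus ?thesis unfolding ent_def by blast
qed
lemma ent_sum[intro]: "(\<And>i. i \<in> S \<Longrightarrow> ent (f i)) \<Longrightarrow> ent (\<lambda>z. \<Sum>i\<in>S. f i z)"
  by (induction S rule: infinite_finite_induct) auto
lemma ent_prod[intro]: "(\<And>i. i \<in> S \<Longrightarrow> ent (f i)) \<Longrightarrow> ent (\<lambda>z. \<Prod>i\<in>S. f i z)"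
  by (induction S rule: infinite_finite_induct) auto
lemma ent_power[intro]: "ent f \<Longrightarrow> ent (\<lambda>z. f z ^ n)"
  by (induction n) auto

end


context NA begin

definition GN :: "real \<Rightarrow> (nat \<Rightarrow> 'a) \<Rightarrow> real" where
  "GN r a = (SUP k. v (a k) * r ^ k)"

lemma GN_bdd: "vc a \<Longrightarrow> r > 0 \<Longrightarrow> bdd_above (range (\<lambda>k. v (a k) * r ^ k))"
  using vc_bounded by (auto simp: bdd_above_def) blast

lemma GN_ge: "vc a \<Longrightarrow> r > 0 \<Longrightarrow> v (a k) * r ^ k \<le> GN r a"
  unfolding GN_def by (rule cSUP_upper[OF _ GN_bdd]) auto

lemma GN_le: "(\<And>k. v (a k) * r ^ k \<le> B) \<Longrightarrow> GN r a \<le> B"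
  unfolding GN_def by (rule cSUP_least) auto

lemma GN_nonneg: "vc a \<Longrightarrow> r > 0 \<Longrightarrow> 0 \<le> GN r a"
  using GN_ge[of a r 0] v_nonneg[of "a 0"] by (simp del: v_nonneg)

lemma GN_attained: assumes "vc a" "r > 0" shows "\<exists>k. GN r a = v (a k) * r ^ k"
proof (cases "\<forall>k. a k = 0")
  case True
  have "GN r a \<le> 0" by (rule GN_le) (use True in auto)
  hence "GN r a = v (a 0) * r ^ 0" using GN_nonneg[OF assms] True by simp
  thus ?thesis by blast
next
  case False
  then obtain k0 where k0: "a k0 \<noteq> 0" by blast
  define m where "m = v (a k0) * r ^ k0"
  have m: "m > 0" unfolding m_def using k0 assms by simp
  obtain N where N: "\<forall>k\<ge>N. v (a k) * r ^ k < m" using assms m unfolding vc_def by blast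
  define N' where "N' = max N (Suc k0)"
  define M where "M = Max ((\<lambda>k. v (a k) * r ^ k) ` {..<N'})"
  have fin: "finite ((\<lambda>k. v (a k) * r ^ k) ` {..<N'})" "(\<lambda>k. v (a k) * r ^ k) ` {..<N'} \<noteq> {}"
    unfolding N'_def by (auto simp: lessThan_empty_iff)
  obtain k1 where k1: "k1 < N'" "M = v (a k1) * r ^ k1"
    using Max_in[OF fin] unfolding M_def by auto
  have mM: "m \<le> M" unfolding M_def m_def by (rule Max_ge[OF fin(1)]) (auto simp: N'_def)
  have "v (a k) * r ^ k \<le> M" for k
  proof (cases "k < N'")
    case True thus ?thesis unfolding M_def by (intro Max_ge[OF fin(1)]) auto
  next
    case False
    hence "k \<ge> N" unfolding N'_def by simp
    hence "v (a k) * r ^ k < m" using N by simp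
    thus ?thesis using mM by linarith
  qed
  hence "GN r a \<le> M" by (intro GN_le)
  moreover have "M \<le> GN r a" using k1 GN_ge[OF assms] by simp
  ultimately show ?thesis using k1 by (intro exI[of _ k1]) simp
qed

lemma GN_cp_le: assumes "vc a" "vc b" "r > 0" shows "GN r (cp a b) \<le> GN r a * GN r b"
proof (rule GN_le)
  fix n
  have rn: "r ^ n > 0" using assms by simp
  have "v (cp a b n) \<le> GN r a * GN r b / r ^ n" unfolding cp_def
  proof (rule v_sum_le)
    fix i assume i: "i \<in> {..n}"
    have "v (a i * b (n - i)) * r ^ n = (v (a i) * r ^ i) * (v (b (n - i)) * r ^ (n - i))"
      using i by (simp add: v_mult power_add[symmetric] algebra_simps)
    also have "\<dots> \<le> GN r a * GN r b"
      using GN_ge[OF assms(1,3)] GN_ge[OF assms(2,3)] GN_nonneg[OF assms(1,3)] assms(3)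
      by (intro mult_mono) auto
    finally show "v (a i * b (n - i)) \<le> GN r a * GN r b / r ^ n" using rn by (simp add: field_simps)
  qed (use GN_nonneg[OF assms(1,3)] GN_nonneg[OF assms(2,3)] rn in auto)
  thus "v (cp a b n) * r ^ n \<le> GN r a * GN r b" using rn by (simp add: field_simps)
qed

lemma prod_lt1: "0 \<le> x \<Longrightarrow> x < A \<Longrightarrow> 0 \<le> y \<Longrightarrow> y \<le> B \<Longrightarrow> 0 < B \<Longrightarrow> x * y < A * (B::real)"
proof -
  assume h: "0 \<le> x" "x < A" "0 \<le> y" "y \<le> B" "0 < B"
  have "x * y \<le> x * B" using h by (intro mult_left_mono) auto
  moreover have "x * B < A * B" using h by (intro mult_strict_right_mono) auto
  ultimately show ?thesis by linarith
qed

lemma prod_lt2: "0 \<le> x \<Longrightarrow> x \<le> A \<Longrightarrow> 0 \<le> y \<Longrightarrow> y < B \<Longrightarrow> 0 < A \<Longrightarrow> x * y < A * (B::real)"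
  using prod_lt1[of y B x A] by (simp add: mult.commute)

lemma GN_cp: assumes "vc a" "vc b" "r > 0" shows "GN r (cp a b) = GN r a * GN r b"
proof (cases "GN r a = 0 \<or> GN r b = 0")
  case True
  thus ?thesis using GN_cp_le[OF assms] GN_nonneg[OF vc_cp[OF assms(1,2)] assms(3)] by auto
next
  case False
  let ?A = "GN r a" and ?B = "GN r b"
  have A: "?A > 0" and B: "?B > 0" using False GN_nonneg[OF assms(1,3)] GN_nonneg[OF assms(2,3)] by auto
  define i0 where "i0 = (LEAST i. ?A = v (a i) * r ^ i)"
  define j0 where "j0 = (LEAST j. ?B = v (b j) * r ^ j)"
  have i0: "?A = v (a i0) * r ^ i0" unfolding i0_def by (rule LeastI_ex[OF GN_attained[OF assms(1,3)]])
  have j0: "?B = v (b j0) * r ^ j0" unfolding j0_def by (rule LeastI_ex[OF GN_attained[OF assms(2,3)]])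
  have i0l: "v (a i) * r ^ i < ?A" if "i < i0" for i
    using GN_ge[OF assms(1,3), of i] not_less_Least[OF that[unfolded i0_def]] by fastforce
  have j0l: "v (b j) * r ^ j < ?B" if "j < j0" for j
    using GN_ge[OF assms(2,3), of j] not_less_Least[OF that[unfolded j0_def]] by fastforce
  define n where "n = i0 + j0"
  have rn: "r ^ n > 0" using assms by simp
  have split: "cp a b n = a i0 * b j0 + (\<Sum>i\<in>{..n} - {i0}. a i * b (n - i))"
    unfolding cp_def by (subst sum.remove[of _ i0]) (auto simp: n_def)
  have main: "v (a i0 * b j0) * r ^ n = ?A * ?B"
    using i0 j0 by (simp add: v_mult n_def power_add algebra_simps)
  have "v (\<Sum>i\<in>{..n} - {i0}. a i * b (n - i)) < ?A * ?B / r ^ n"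
  proof (rule v_sum_lt)
    fix i assume i: "i \<in> {..n} - {i0}"
    have eq: "v (a i * b (n - i)) * r ^ n = (v (a i) * r ^ i) * (v (b (n - i)) * r ^ (n - i))"
      using i by (simp add: v_mult power_add[symmetric] algebra_simps)
    have ai: "0 \<le> v (a i) * r ^ i" "v (a i) * r ^ i \<le> ?A" using GN_ge[OF assms(1,3)] assms(3) by auto
    have bi: "0 \<le> v (b (n-i)) * r ^ (n-i)" "v (b (n-i)) * r ^ (n-i) \<le> ?B" using GN_ge[OF assms(2,3)] assms(3) by auto
    have "(v (a i) * r ^ i) * (v (b (n - i)) * r ^ (n - i)) < ?A * ?B"
    proof (cases "i < i0")
      case True
      thus ?thesis using i0l[OF True] bi B ai(1) by (intro prod_lt1) auto
    next
      case False
      hence "n - i < j0" using i unfolding n_def by auto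
      thus ?thesis using j0l ai A bi(1) by (intro prod_lt2) auto
    qed
    thus "v (a i * b (n - i)) < ?A * ?B / r ^ n" using eq rn by (simp add: field_simps)
  qed (use A B rn in auto)
  hence "r ^ n * v (\<Sum>i\<in>{..n} - {i0}. a i * b (n - i)) < r ^ n * v (a i0 * b j0)"
    using main rn by (simp add: field_simps)
  hence "v (\<Sum>i\<in>{..n} - {i0}. a i * b (n - i)) < v (a i0 * b j0)"
    using rn by (simp add: mult_less_cancel_left_pos)
  hence "v (cp a b n) = v (a i0 * b j0)"
    unfolding split by (rule v_add_strict)
  hence "?A * ?B \<le> GN r (cp a b)" using GN_ge[OF vc_cp[OF assms(1,2)] assms(3), of n] main by simp
  thus ?thesis using GN_cp_le[OF assms] by linarith
qed

lemma rep_zero: assumes "rep c (\<lambda>z. 0)" shows "c = (\<lambda>k. 0)"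
proof (rule ccontr)
  assume "c \<noteq> (\<lambda>k. 0)"
  then obtain k where "c k \<noteq> 0" by auto
  define m where "m = (LEAST k. c k \<noteq> 0)"
  have cm: "c m \<noteq> 0" unfolding m_def using LeastI[of "\<lambda>k. c k \<noteq> 0" k] \<open>c k \<noteq> 0\<close> by simp
  have below: "c k = 0" if "k < m" for k using not_less_Least[OF that[unfolded m_def]] by simp
  have vcc: "vc c" using assms unfolding rep_def by auto
  obtain A where A: "A \<ge> 0" "\<forall>k. v (c k) * 1 ^ k \<le> A" using vc_bounded[OF vcc, of 1] by auto
  have "v (c m) \<le> A" using A(2)[rule_format, of m] by simp
  moreover have "0 < v (c m)" using cm by simp
  ultimately have Apos: "A > 0" by linarith
  obtain z where z: "z \<noteq> 0" "v z < min 1 (v (c m) / A)"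
    using exists_small[of "min 1 (v (c m) / A)"] cm Apos by auto
  have vz: "0 < v z" "v z < 1" "A * v z < v (c m)" using z Apos by (auto simp: field_simps)
  define e where "e = v (c m) * v z ^ m"
  have e: "e > 0" unfolding e_def using cm vz by simp
  obtain N where N: "\<forall>n\<ge>N. v (psum c z n - 0) < e" using assms e unfolding rep_def vt_iff by blast
  define n where "n = N + m + 1"
  have "psum c z n = c m * z ^ m + (\<Sum>k\<in>{..<n} - {m}. c k * z ^ k)"
    unfolding psum_def by (subst sum.remove[of _ m]) (auto simp: n_def)
  moreover have "v (\<Sum>k\<in>{..<n} - {m}. c k * z ^ k) < e"
  proof (rule v_sum_lt)
    fix k assume k: "k \<in> {..<n} - {m}"
    show "v (c k * z ^ k) < e"
    proof (cases "k < m")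
      case True thus ?thesis using below e by simp
    next
      case False
      hence km: "k \<ge> Suc m" using k by auto
      have "v (c k * z ^ k) = v (c k) * v z ^ k" by (simp add: v_mult v_power)
      also have "\<dots> \<le> A * v z ^ k" using A(2) vz by (intro mult_right_mono) auto
      also have "\<dots> \<le> A * v z ^ Suc m" using A(1) vz km by (intro mult_left_mono power_decreasing) auto
      also have "\<dots> = (A * v z) * v z ^ m" by simp
      also have "\<dots> < e" unfolding e_def using vz by (intro mult_strict_right_mono) auto
      finally show ?thesis .
    qed
  qed (use e in auto)
  moreover have "v (c m * z ^ m) = e" unfolding e_def by (simp add: v_mult v_power)
  ultimately have "v (psum c z n) = e" using v_add_strict by simp
  moreover have "v (psum c z n - 0) < e" using N unfolding n_def by auto
  ultimately show False by simp
qed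

lemma rep_unique: assumes "rep a f" "rep b f" shows "a = b"
proof -
  have "rep (\<lambda>k. a k + (-1) * b k) (\<lambda>z. f z + (-1) * f z)"
    using rep_add[OF assms(1) rep_cmult[OF assms(2)]] .
  hence "rep (\<lambda>k. a k + (-1) * b k) (\<lambda>z. 0)" by simp
  hence "(\<lambda>k. a k + (-1) * b k) = (\<lambda>k. 0)" by (rule rep_zero)
  thus ?thesis by (auto simp: fun_eq_iff)
qed

definition cf :: "('a \<Rightarrow> 'a) \<Rightarrow> nat \<Rightarrow> 'a" where
  "cf f = (SOME a. rep a f)"

definition N :: "real \<Rightarrow> ('a \<Rightarrow> 'a) \<Rightarrow> real" where
  "N r f = GN r (cf f)"

lemma cf_eq: "rep a f \<Longrightarrow> cf f = a"
  unfolding cf_def by (rule some_equality) (auto intro: rep_unique)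

lemma rep_cf: "ent f \<Longrightarrow> rep (cf f) f"
  unfolding ent_def using cf_eq by auto

lemma N_rep: "rep a f \<Longrightarrow> N r f = GN r a"
  unfolding N_def using cf_eq by simp

lemma N_nonneg: "ent f \<Longrightarrow> r > 0 \<Longrightarrow> 0 \<le> N r f"
  unfolding N_def using rep_cf GN_nonneg rep_def by blast

lemma N_coeff: assumes "rep a f" "r > 0" shows "v (a k) * r ^ k \<le> N r f"
  using GN_ge[of a r k] N_rep[OF assms(1), of r] assms unfolding rep_def by simp

lemma N_mult: assumes "ent f" "ent g" "r > 0" shows "N r (\<lambda>z. f z * g z) = N r f * N r g"
proof -
  obtain a b where a: "rep a f" and b: "rep b g" using assms unfolding ent_def by blast
  show ?thesis using rep_mult[OF a b] N_rep[OF a] N_rep[OF b] N_rep[OF rep_mult[OF a b]]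
      GN_cp[of a b r] a b assms(3) unfolding rep_def by simp
qed

lemma N_const: assumes "r > 0" shows "N r (\<lambda>z. c) = v c"
proof -
  have "N r (\<lambda>z. c) = GN r (\<lambda>k. if k = 0 then c else 0)" by (rule N_rep[OF rep_const])
  also have "\<dots> = v c"
  proof (rule antisym)
    show "GN r (\<lambda>k. if k = 0 then c else 0) \<le> v c" by (rule GN_le) auto
    show "v c \<le> GN r (\<lambda>k. if k = 0 then c else 0)"
      using GN_ge[OF _ assms, of "\<lambda>k. if k = 0 then c else 0" 0] rep_const[of c] unfolding rep_def by simp
  qed
  finally show ?thesis .
qed

lemma N_cmult: assumes "ent f" "r > 0" shows "N r (\<lambda>z. c * f z) = v c * N r f"
  using N_mult[OF ent_const assms(1,2), of c] N_const[OF assms(2)] by simp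

lemma N_uminus: assumes "ent f" "r > 0" shows "N r (\<lambda>z. - f z) = N r f"
  using N_cmult[OF assms, of "-1"] by simp

lemma N_add: assumes "ent f" "ent g" "r > 0" shows "N r (\<lambda>z. f z + g z) \<le> max (N r f) (N r g)"
proof -
  obtain a b where a: "rep a f" and b: "rep b g" using assms unfolding ent_def by blast
  have "GN r (\<lambda>k. a k + b k) \<le> max (GN r a) (GN r b)"
  proof (rule GN_le)
    fix k
    have "v (a k + b k) * r ^ k \<le> max (v (a k)) (v (b k)) * r ^ k"
      using assms(3) by (intro mult_right_mono v_add) auto
    also have "\<dots> = max (v (a k) * r ^ k) (v (b k) * r ^ k)" using assms(3) by (simp add: max_mult_distrib_right)
    also have "\<dots> \<le> max (GN r a) (GN r b)"
      using GN_ge[of a r k] GN_ge[of b r k] a b assms(3) unfolding rep_def by (auto simp: max_def)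
    finally show "v (a k + b k) * r ^ k \<le> max (GN r a) (GN r b)" .
  qed
  thus ?thesis using N_rep[OF a] N_rep[OF b] N_rep[OF rep_add[OF a b]] by simp
qed

lemma N_add_le: assumes "ent f" "ent g" "r > 0" "N r f \<le> B" "N r g \<le> B"
  shows "N r (\<lambda>z. f z + g z) \<le> B"
  using N_add[OF assms(1-3)] assms(4,5) by linarith

lemma N_diff: assumes "ent f" "ent g" "r > 0" shows "N r (\<lambda>z. f z - g z) \<le> max (N r f) (N r g)"
  using N_add[OF assms(1) ent_uminus[OF assms(2)] assms(3)] N_uminus[OF assms(2,3)] by simp

lemma N_diff_le: assumes "ent f" "ent g" "r > 0" "N r f \<le> B" "N r g \<le> B"
  shows "N r (\<lambda>z. f z - g z) \<le> B"
  using N_diff[OF assms(1-3)] assms(4,5) by linarith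

lemma N_sum_le: assumes "\<And>i. i \<in> S \<Longrightarrow> ent (f i)" "\<And>i. i \<in> S \<Longrightarrow> N r (f i) \<le> B" "0 \<le> B" "r > 0"
  shows "N r (\<lambda>z. \<Sum>i\<in>S. f i z) \<le> B"
  using assms
proof (induction S rule: infinite_finite_induct)
  case (infinite S) thus ?case using N_const[of r 0] by simp
next
  case empty thus ?case using N_const[of r 0] by simp
next
  case (insert x F)
  have "N r (\<lambda>z. f x z + (\<Sum>i\<in>F. f i z)) \<le> B"
    using insert by (intro N_add_le) auto
  thus ?case using insert by simp
qed

lemma N_prod: assumes "\<And>i. i \<in> S \<Longrightarrow> ent (f i)" "r > 0"
  shows "N r (\<lambda>z. \<Prod>i\<in>S. f i z) = (\<Prod>i\<in>S. N r (f i))"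
  using assms
proof (induction S rule: infinite_finite_induct)
  case (infinite S) thus ?case using N_const[of r 1] by simp
next
  case empty thus ?case using N_const[of r 1] by simp
next
  case (insert x F)
  have "N r (\<lambda>z. f x z * (\<Prod>i\<in>F. f i z)) = N r (f x) * N r (\<lambda>z. \<Prod>i\<in>F. f i z)"
    using insert by (intro N_mult) auto
  thus ?case using insert by simp
qed

lemma N_power: assumes "ent f" "r > 0" shows "N r (\<lambda>z. f z ^ n) = N r f ^ n"
proof (induction n)
  case 0 thus ?case using N_const[OF assms(2), of 1] by simp
next
  case (Suc n)
  have "N r (\<lambda>z. f z * f z ^ n) = N r f * N r (\<lambda>z. f z ^ n)"
    using assms by (intro N_mult) auto
  thus ?case using Suc by simp
qed

lemma N_mono: assumes "ent f" "0 < r" "r \<le> r'" shows "N r f \<le> N r' f"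
proof -
  obtain a where a: "rep a f" using assms unfolding ent_def by blast
  have "GN r a \<le> GN r' a"
  proof (rule GN_le)
    fix k
    have "v (a k) * r ^ k \<le> v (a k) * r' ^ k" using assms by (intro mult_left_mono power_mono) auto
    also have "\<dots> \<le> GN r' a" using GN_ge[of a r' k] a assms unfolding rep_def by auto
    finally show "v (a k) * r ^ k \<le> GN r' a" .
  qed
  thus ?thesis using N_rep[OF a] by simp
qed

lemma const_of_bounded:
  assumes "ent f" "\<forall>R. \<exists>r\<ge>R. r > 0 \<and> N r f \<le> B"
  shows "\<exists>c. \<forall>z. f z = c"
proof -
  obtain a where a: "rep a f" using assms unfolding ent_def by blast
  have ak: "a k = 0" if "k \<ge> 1" for k
  proof (rule ccontr)
    assume ne: "a k \<noteq> 0"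
    obtain r where r: "r \<ge> max 1 (B / v (a k) + 1)" "r > 0" "N r f \<le> B" using assms(2) by blast
    have "v (a k) * r ^ k \<le> B" using N_coeff[OF a r(2), of k] r by linarith
    moreover have "r \<le> r ^ k"
    proof -
      have "1 \<le> r" using r by simp
      hence "r ^ 1 \<le> r ^ k" using that by (intro power_increasing) auto
      thus ?thesis by simp
    qed
    moreover have "B < v (a k) * r"
    proof -
      have va: "v (a k) > 0" using ne by simp
      have "v (a k) * (B / v (a k) + 1) \<le> v (a k) * r" using r va by (intro mult_left_mono) auto
      moreover have "v (a k) * (B / v (a k) + 1) = B + v (a k)" using va by (simp add: field_simps)
      ultimately show ?thesis using va by linarith
    qed
    moreover have "v (a k) * r \<le> v (a k) * r ^ k" using \<open>r \<le> r ^ k\<close> by (intro mult_left_mono) auto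
    ultimately show False by linarith
  qed
  have "f z = a 0" for z
  proof -
    have "psum a z n = a 0" if "n \<ge> 1" for n
    proof -
      have "psum a z n = (\<Sum>k\<in>{..<n}. if k = 0 then a 0 else 0)"
        unfolding psum_def using ak by (intro sum.cong) auto
      also have "\<dots> = a 0" using that by (subst sum.delta) auto
      finally show ?thesis .
    qed
    hence "v_tendsto v (psum a z) (a 0)" by (intro vt_eventually) auto
    thus ?thesis using a vt_unique unfolding rep_def by blast
  qed
  thus ?thesis by blast
qed

lemma nonconst_big:
  assumes "ent f" "\<not> (\<exists>c. \<forall>z. f z = c)"
  shows "\<exists>R>0. \<forall>r\<ge>R. N r f > B"
proof -
  obtain R where R: "\<forall>r\<ge>R. r > 0 \<longrightarrow> N r f > B"
    using const_of_bounded[OF assms(1), of B] assms(2) by (meson not_le)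
  define R' where "R' = max R 1"
  have "\<forall>r\<ge>R'. N r f > B" using R unfolding R'_def by auto
  moreover have "R' > 0" unfolding R'_def by simp
  ultimately show ?thesis by blast
qed

end


locale NAC = NA v for v :: "'a::field \<Rightarrow> real" +
  assumes comp: "v_complete v" and acl: "alg_closed_field TYPE('a)"
begin

lemma has_root: "1 \<le> degree (p :: 'a poly) \<Longrightarrow> \<exists>x. poly p x = 0"
  using acl unfolding alg_closed_field_def by blast

lemma factorization:
  fixes p :: "'a poly"
  assumes "p \<noteq> 0"
  shows "\<exists>xs. length xs = degree p \<and> p = smult (lead_coeff p) (\<Prod>x\<leftarrow>xs. [:-x, 1:])"
  using assms
proof (induction "degree p" arbitrary: p rule: less_induct)
  case (less p)
  show ?case
  proof (cases "degree p = 0")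
    case True
    thus ?thesis
      by (intro exI[of _ "[]"]) (auto elim!: degree_eq_zeroE)
  next
    case False
    then obtain x where x: "poly p x = 0"
      using has_root by (metis One_nat_def Suc_leI neq0_conv)
    hence "[:-x, 1:] dvd p"
      using poly_eq_0_iff_dvd by blast
    then obtain q where p_eq: "p = [:-x, 1:] * q"
      by (elim dvdE)
    have "q \<noteq> 0"
      using less.prems p_eq by auto
    moreover from this have deg: "degree p = Suc (degree q)"
      unfolding p_eq by (subst degree_mult_eq) auto
    ultimately obtain xs where A: "length xs = degree q" "q = smult (lead_coeff q) (\<Prod>x\<leftarrow>xs. [:-x, 1:])"
      using less.hyps[of q] by auto
    have "smult (lead_coeff p) (\<Prod>y\<leftarrow>x # xs. [:- y, 1:]) =
          [:- x, 1:] * smult (lead_coeff q) (\<Prod>y\<leftarrow>xs. [:- y, 1:])"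
      unfolding p_eq lead_coeff_mult by simp
    also note A(2) [symmetric]
    also note p_eq [symmetric]
    finally show ?thesis using A(1)
      by (intro exI[of _ "x # xs"]) (auto simp: deg)
  qed
qed

lemma poly_prod_list_lin: "poly (\<Prod>x\<leftarrow>xs. [:-x, 1:]) (w::'a) = (\<Prod>x\<leftarrow>xs. w - x)"
  by (induction xs) (auto simp: algebra_simps)

lemma poly_prod_lin0: "poly (\<Prod>x\<leftarrow>xs. [:-x, 1:]) 0 = (\<Prod>x\<leftarrow>xs. - (x::'a))"
  by (induction xs) (auto simp: algebra_simps)

lemma v_prod_neg: "v (\<Prod>x\<leftarrow>xs. - (x::'a)) = (\<Prod>x\<leftarrow>xs. v x)"
  by (induction xs) (auto simp: v_mult)

lemma roots_in_list:
  fixes xs :: "'a list"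
  assumes "p = smult c (\<Prod>x\<leftarrow>xs. [:-x, 1:])" "y \<in> set xs"
  shows "poly p y = 0"
proof -
  have "poly p y = c * (\<Prod>x\<leftarrow>xs. y - x)" using assms(1) by (simp only: poly_smult poly_prod_list_lin)
  moreover have "(\<Prod>x\<leftarrow>xs. y - x) = 0" using assms(2) by (auto simp: prod_list_zero_iff)
  ultimately show ?thesis by simp
qed

definition pbnd :: "real \<Rightarrow> 'a poly \<Rightarrow> real \<Rightarrow> bool" where
  "pbnd r p B \<longleftrightarrow> (\<forall>k. v (coeff p k) * r ^ k \<le> B)"

lemma pbnd_mult: assumes "pbnd r p B1" "pbnd r q B2" "0 \<le> B1" "0 \<le> B2" "r > 0"
  shows "pbnd r (p * q) (B1 * B2)"
  unfolding pbnd_def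
proof
  fix n
  have rn: "r ^ n > 0" using assms by simp
  have "v (coeff (p * q) n) \<le> B1 * B2 / r ^ n" unfolding coeff_mult
  proof (rule v_sum_le)
    fix i assume i: "i \<in> {..n}"
    have "v (coeff p i * coeff q (n - i)) * r ^ n = (v (coeff p i) * r ^ i) * (v (coeff q (n - i)) * r ^ (n - i))"
      using i by (simp add: v_mult power_add[symmetric] algebra_simps)
    also have "\<dots> \<le> B1 * B2"
      using assms unfolding pbnd_def by (intro mult_mono) auto
    finally show "v (coeff p i * coeff q (n - i)) \<le> B1 * B2 / r ^ n" using rn by (simp add: field_simps)
  qed (use assms rn in auto)
  thus "v (coeff (p * q) n) * r ^ n \<le> B1 * B2" using rn by (simp add: field_simps)
qed

lemma pbnd_lin: assumes "v x \<ge> r" "r > 0" shows "pbnd r [:-x, 1:] (v x)"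
  unfolding pbnd_def
proof
  fix k show "v (coeff [:-x, 1:] k) * r ^ k \<le> v x"
    using assms by (cases k) (auto simp: coeff_pCons split: nat.splits)
qed

lemma pbnd_prod: assumes "\<forall>x\<in>set xs. v x \<ge> r" "r > 0"
  shows "pbnd r (\<Prod>x\<leftarrow>xs. [:-x, 1:]) (\<Prod>x\<leftarrow>xs. v x)"
  using assms
proof (induction xs)
  case Nil thus ?case unfolding pbnd_def by (auto simp: coeff_1 less_imp_le)
next
  case (Cons x xs)
  have "pbnd r ([:-x, 1:] * (\<Prod>x\<leftarrow>xs. [:-x, 1:])) (v x * (\<Prod>x\<leftarrow>xs. v x))"
    using Cons by (intro pbnd_mult pbnd_lin prod_list_nonneg) auto
  thus ?case by (simp only: list.map prod_list.Cons)
qed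

lemma pbnd_smult: assumes "pbnd r p B" shows "pbnd r (smult c p) (v c * B)"
  using assms unfolding pbnd_def
  by (auto simp: v_mult mult.assoc intro!: mult_left_mono)

lemma v_prod_list: "v (prod_list xs) = (\<Prod>x\<leftarrow>xs. v x)"
  by (induction xs) (auto simp: v_mult)

lemma lemmaA:
  assumes "p \<noteq> 0" "r > 0" "\<forall>x. poly p x = 0 \<longrightarrow> v x \<ge> r"
  shows "pbnd r p (v (poly p 0))"
proof -
  obtain xs where xs: "p = smult (lead_coeff p) (\<Prod>x\<leftarrow>xs. [:-x, 1:])"
    using factorization[OF assms(1)] by blast
  have "\<forall>x\<in>set xs. v x \<ge> r" using assms(3) roots_in_list[OF xs] by blast
  hence "pbnd r (smult (lead_coeff p) (\<Prod>x\<leftarrow>xs. [:-x, 1:])) (v (lead_coeff p) * (\<Prod>x\<leftarrow>xs. v x))"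
    using assms(2) by (intro pbnd_smult pbnd_prod)
  moreover have "v (poly p 0) = v (lead_coeff p) * (\<Prod>x\<leftarrow>xs. v x)"
  proof -
    have "poly p 0 = lead_coeff p * (\<Prod>x\<leftarrow>xs. - x)"
      by (subst xs) (simp only: poly_smult poly_prod_lin0)
    hence "v (poly p 0) = v (lead_coeff p) * v (\<Prod>x\<leftarrow>xs. - x)" by (simp add: v_mult)
    also have "v (\<Prod>x\<leftarrow>xs. - x) = (\<Prod>x\<leftarrow>xs. v x)"
      by (rule v_prod_neg)
    finally show ?thesis .
  qed
  ultimately show ?thesis using xs by simp
qed

lemma prod_list_mono_nonneg:
  assumes "\<forall>x\<in>set xs. 0 \<le> f x \<and> f x \<le> (g x :: real)"
  shows "(\<Prod>x\<leftarrow>xs. f x) \<le> (\<Prod>x\<leftarrow>xs. g x)"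
  using assms
proof (induction xs)
  case (Cons x xs)
  thus ?case by (auto intro!: mult_mono prod_list_nonneg order_trans[of 0 "f _" "g _"])
qed simp

lemma lemmaB:
  assumes "p \<noteq> 0" "degree p \<le> m" "v w \<le> r" "0 < dl" "dl \<le> r"
    "\<forall>x. poly p x = 0 \<longrightarrow> v (w - x) \<ge> dl"
  shows "v (poly p 0) * (dl / r) ^ m \<le> v (poly p w)"
proof -
  obtain xs where len: "length xs = degree p" and xs: "p = smult (lead_coeff p) (\<Prod>x\<leftarrow>xs. [:-x, 1:])"
    using factorization[OF assms(1)] by blast
  have r: "r > 0" using assms by linarith
  have q: "0 < dl / r" "dl / r \<le> 1" using assms r by auto
  have each: "v x * (dl / r) \<le> v (w - x)" if "x \<in> set xs" for x
  proof (cases "v x > r")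
    case True
    hence "v (w - x) = v x" using assms(3) v_diff_strict[of w x] by (metis v_commute le_less_trans v_diff_strict)
    moreover have "v x * (dl / r) \<le> v x * 1" using q by (intro mult_left_mono) auto
    ultimately show ?thesis by simp
  next
    case False
    have "v (w - x) \<ge> dl" using assms(6) roots_in_list[OF xs that] by blast
    moreover have "v x * (dl / r) \<le> dl" using False q r by (simp add: field_simps mult_right_mono)
    ultimately show ?thesis by linarith
  qed
  have pw: "poly p w = lead_coeff p * (\<Prod>x\<leftarrow>xs. w - x)"
    by (subst xs) (simp only: poly_smult poly_prod_list_lin)
  have p0: "v (poly p 0) = v (lead_coeff p) * (\<Prod>x\<leftarrow>xs. v x)"
  proof -
    have "poly p 0 = lead_coeff p * (\<Prod>x\<leftarrow>xs. - x)"
      by (subst xs) (simp only: poly_smult poly_prod_lin0)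
    hence "v (poly p 0) = v (lead_coeff p) * v (\<Prod>x\<leftarrow>xs. - x)" by (simp add: v_mult)
    also have "v (\<Prod>x\<leftarrow>xs. - x) = (\<Prod>x\<leftarrow>xs. v x)"
      by (rule v_prod_neg)
    finally show ?thesis .
  qed
  have "(\<Prod>x\<leftarrow>xs. v x) * (dl / r) ^ m \<le> (\<Prod>x\<leftarrow>xs. v x) * (dl / r) ^ length xs"
    using q len assms(2) by (intro mult_left_mono power_decreasing prod_list_nonneg) auto
  also have "\<dots> = (\<Prod>x\<leftarrow>xs. v x * (dl / r))"
    by (induction xs) (auto simp: algebra_simps)
  also have "\<dots> \<le> (\<Prod>x\<leftarrow>xs. v (w - x))"
    using each q r assms(4) by (intro prod_list_mono_nonneg) (auto intro!: divide_nonneg_pos mult_nonneg_nonneg)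
  also have "\<dots> = v (\<Prod>x\<leftarrow>xs. w - x)" by (simp add: v_prod_list o_def)
  finally have "(\<Prod>x\<leftarrow>xs. v x) * (dl / r) ^ m \<le> v (\<Prod>x\<leftarrow>xs. w - x)" .
  hence "v (lead_coeff p) * ((\<Prod>x\<leftarrow>xs. v x) * (dl / r) ^ m) \<le> v (lead_coeff p) * v (\<Prod>x\<leftarrow>xs. w - x)"
    by (intro mult_left_mono) auto
  thus ?thesis unfolding p0 pw by (simp add: v_mult mult.assoc)
qed

end


context NAC begin

definition Ptr :: "(nat \<Rightarrow> 'a) \<Rightarrow> nat \<Rightarrow> 'a poly" where
  "Ptr a n = (\<Sum>i\<le>n. monom (a i) i)"

lemma coeff_Ptr: "coeff (Ptr a n) i = (if i \<le> n then a i else 0)"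
proof -
  have "coeff (Ptr a n) i = (\<Sum>j\<le>n. if j = i then a j else 0)"
    unfolding Ptr_def coeff_sum coeff_monom by (intro sum.cong) auto
  also have "\<dots> = (if i \<le> n then a i else 0)" by (subst sum.delta) auto
  finally show ?thesis .
qed

lemma poly_Ptr: "poly (Ptr a n) z = (\<Sum>i\<le>n. a i * z ^ i)"
  unfolding Ptr_def poly_sum poly_monom by simp

lemma poly_Ptr_psum: "poly (Ptr a n) z = psum a z (Suc n)"
  unfolding poly_Ptr psum_def lessThan_Suc_atMost ..

lemma degree_Ptr: "degree (Ptr a n) \<le> n"
  by (rule degree_le) (auto simp: coeff_Ptr)

lemma Ptr_Suc: "poly (Ptr a (Suc n)) z = poly (Ptr a n) z + a (Suc n) * z ^ Suc n"
  unfolding poly_Ptr by simp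

lemma v_pow_diff: assumes "v x \<le> r" "v y \<le> r"
  shows "v (x ^ Suc i - y ^ Suc i) \<le> v (x - y) * r ^ i"
proof (induction i)
  case 0 thus ?case by simp
next
  case (Suc i)
  have r: "0 \<le> r" using assms v_nonneg[of x] by linarith
  have eq: "x ^ Suc (Suc i) - y ^ Suc (Suc i) = x * (x ^ Suc i - y ^ Suc i) + (x - y) * y ^ Suc i"
    by (simp add: algebra_simps)
  have 1: "v (x * (x ^ Suc i - y ^ Suc i)) \<le> v (x - y) * r ^ Suc i"
  proof -
    have "v (x * (x ^ Suc i - y ^ Suc i)) = v x * v (x ^ Suc i - y ^ Suc i)" by (simp add: v_mult)
    also have "\<dots> \<le> r * (v (x - y) * r ^ i)" using Suc assms r by (intro mult_mono) auto
    finally show ?thesis by (simp add: algebra_simps)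
  qed
  have 2: "v ((x - y) * y ^ Suc i) \<le> v (x - y) * r ^ Suc i"
  proof -
    have "v (y ^ Suc i) \<le> r ^ Suc i" unfolding v_power using assms by (intro power_mono) auto
    hence "v (x - y) * v (y ^ Suc i) \<le> v (x - y) * r ^ Suc i" by (intro mult_left_mono) auto
    thus ?thesis by (simp add: v_mult)
  qed
  show ?case unfolding eq using 1 2 by (rule v_add_le)
qed

definition closest :: "'a poly \<Rightarrow> 'a \<Rightarrow> 'a" where
  "closest p w = (SOME b. poly p b = 0 \<and> (\<forall>x. poly p x = 0 \<longrightarrow> v (w - b) \<le> v (w - x)))"

lemma closest:
  assumes "p \<noteq> 0" "poly p x0 = 0"
  shows "poly p (closest p w) = 0 \<and> (\<forall>x. poly p x = 0 \<longrightarrow> v (w - closest p w) \<le> v (w - x))"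
proof -
  define S where "S = {x. poly p x = 0}"
  have fin: "finite ((\<lambda>x. v (w - x)) ` S)" "(\<lambda>x. v (w - x)) ` S \<noteq> {}"
    using poly_roots_finite[OF assms(1)] assms(2) unfolding S_def by auto
  obtain b where b: "b \<in> S" "v (w - b) = Min ((\<lambda>x. v (w - x)) ` S)"
    using Min_in[OF fin] by auto
  have "\<forall>x\<in>S. v (w - b) \<le> v (w - x)" using b(2) Min_le[OF fin(1)] by auto
  hence "\<exists>b. poly p b = 0 \<and> (\<forall>x. poly p x = 0 \<longrightarrow> v (w - b) \<le> v (w - x))"
    using b(1) unfolding S_def by auto
  thus ?thesis unfolding closest_def by (rule someI_ex)
qed

lemma rep_coeffs_const: assumes "rep a f" "\<forall>k\<ge>1. a k = 0" shows "f z = a 0"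
proof -
  have "psum a z n = a 0" if "n \<ge> 1" for n
  proof -
    have "psum a z n = (\<Sum>k\<in>{..<n}. if k = 0 then a 0 else 0)"
      unfolding psum_def using assms(2) by (intro sum.cong) auto
    also have "\<dots> = a 0" using that by (subst sum.delta) auto
    finally show ?thesis .
  qed
  hence "v_tendsto v (psum a z) (a 0)" by (intro vt_eventually) auto
  thus ?thesis using assms(1) vt_unique unfolding rep_def by blast
qed

lemma rep_at0: assumes "rep a f" shows "f 0 = a 0"
proof -
  have "psum a 0 n = a 0" if "n \<ge> 1" for n
  proof -
    have "psum a 0 n = (\<Sum>k\<in>{..<n}. if k = 0 then a 0 else 0)"
      unfolding psum_def by (intro sum.cong) auto
    also have "\<dots> = a 0" using that by (subst sum.delta) auto
    finally show ?thesis .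
  qed
  hence "v_tendsto v (psum a 0) (a 0)" by (intro vt_eventually) auto
  thus ?thesis using assms(1) vt_unique unfolding rep_def by blast
qed

end


context NAC begin

lemma zero_free_coeffs:
  assumes a: "rep a f" and nz: "\<forall>z. f z \<noteq> 0"
  shows "\<forall>k\<ge>1. a k = 0"
proof (rule ccontr)
  assume "\<not> (\<forall>k\<ge>1. a k = 0)"
  then obtain k where k: "k \<ge> 1" "a k \<noteq> 0" by blast
  have vca: "vc a" using a unfolding rep_def by auto
  have a0: "a 0 \<noteq> 0" using rep_at0[OF a] nz by metis
  have va0: "v (a 0) > 0" using a0 by simp
  have vak: "v (a k) > 0" using k by simp
  define r where "r = max 1 (v (a 0) / v (a k) + 1)"
  have r1: "r \<ge> 1" unfolding r_def by auto
  hence r0: "r > 0" by linarith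
  have big: "v (a 0) < v (a k) * r ^ k"
  proof -
    have "r ^ 1 \<le> r ^ k" using r1 k by (intro power_increasing) auto
    hence "v (a k) * r \<le> v (a k) * r ^ k" using vak by (intro mult_left_mono) auto
    moreover have "v (a k) * (v (a 0) / v (a k) + 1) \<le> v (a k) * r" unfolding r_def using vak
      by (intro mult_left_mono) auto
    moreover have "v (a k) * (v (a 0) / v (a k) + 1) = v (a 0) + v (a k)" using vak by (simp add: field_simps)
    ultimately show ?thesis using vak by linarith
  qed
  obtain N0 where N0: "\<forall>n\<ge>N0. v (a n) * r ^ n < v (a 0)" using vca r0 va0 unfolding vc_def by blast
  define n1 where "n1 = max N0 k"
  have n1: "n1 \<ge> k" "n1 \<ge> N0" unfolding n1_def by auto
  let ?P = "Ptr a"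
  have Pnz: "?P n \<noteq> 0" for n
  proof
    assume "?P n = 0"
    hence "coeff (?P n) 0 = 0" by simp
    thus False using a0 by (simp add: coeff_Ptr)
  qed
  have P0: "poly (?P n) 0 = a 0" for n
    unfolding poly_Ptr by (subst sum.atMost_shift) (auto simp: power_0_left)
  have Proot: "\<exists>x. poly (?P n) x = 0" if "n \<ge> k" for n
  proof -
    have "coeff (?P n) k \<noteq> 0" using that k by (simp add: coeff_Ptr)
    hence "k \<le> degree (?P n)" by (rule le_degree)
    thus ?thesis using k has_root by auto
  qed
  obtain z0 where z0: "poly (?P n1) z0 = 0" "v z0 \<le> r"
  proof -
    have "\<exists>x. poly (?P n1) x = 0 \<and> v x \<le> r"
    proof (rule ccontr)
      assume "\<not> ?thesis"
      hence "\<forall>x. poly (?P n1) x = 0 \<longrightarrow> v x \<ge> r" by auto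
      hence "pbnd r (?P n1) (v (poly (?P n1) 0))" using lemmaA[OF Pnz r0] by blast
      hence "v (coeff (?P n1) k) * r ^ k \<le> v (a 0)" unfolding pbnd_def P0 by blast
      thus False using big n1 by (simp add: coeff_Ptr)
    qed
    thus ?thesis using that by blast
  qed
  have step: "poly (?P (Suc n)) (closest (?P (Suc n)) w) = 0 \<and>
      v (w - closest (?P (Suc n)) w) < r \<and> v (closest (?P (Suc n)) w) \<le> r \<and>
      v (a 0) * (v (w - closest (?P (Suc n)) w) / r) ^ Suc n \<le> v (a (Suc n)) * r ^ Suc n"
    if n: "n \<ge> n1" and w: "poly (?P n) w = 0" "v w \<le> r" for n w
  proof -
    define b where "b = closest (?P (Suc n)) w"
    define dl where "dl = v (w - b)"
    have rt: "\<exists>x. poly (?P (Suc n)) x = 0" using Proot n n1 by simp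
    have b: "poly (?P (Suc n)) b = 0" "\<forall>x. poly (?P (Suc n)) x = 0 \<longrightarrow> dl \<le> v (w - x)"
      using closest[OF Pnz, of "Suc n" _ w] rt unfolding b_def dl_def by blast+
    have Pw: "poly (?P (Suc n)) w = a (Suc n) * w ^ Suc n" using Ptr_Suc w by simp
    have eps: "v (poly (?P (Suc n)) w) \<le> v (a (Suc n)) * r ^ Suc n"
      unfolding Pw v_mult v_power using w by (intro mult_left_mono power_mono) auto
    have epsl: "v (a (Suc n)) * r ^ Suc n < v (a 0)" using N0[rule_format, of "Suc n"] n n1 by linarith
    have deg: "degree (?P (Suc n)) \<le> Suc n" by (rule degree_Ptr)
    have dlr: "dl < r"
    proof (rule ccontr)
      assume "\<not> dl < r"
      hence "\<forall>x. poly (?P (Suc n)) x = 0 \<longrightarrow> v (w - x) \<ge> r" using b by force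
      hence "v (poly (?P (Suc n)) 0) * (r / r) ^ Suc n \<le> v (poly (?P (Suc n)) w)"
        using lemmaB[OF Pnz deg w(2) r0 order_refl] by blast
      thus False using eps epsl r0 by (simp add: P0)
    qed
    have main: "v (a 0) * (dl / r) ^ Suc n \<le> v (a (Suc n)) * r ^ Suc n"
    proof (cases "dl = 0")
      case True thus ?thesis using r0 by simp
    next
      case False
      hence "dl > 0" unfolding dl_def using v_nonneg by (metis less_eq_real_def)
      hence "v (poly (?P (Suc n)) 0) * (dl / r) ^ Suc n \<le> v (poly (?P (Suc n)) w)"
        using lemmaB[OF Pnz deg w(2) _ less_imp_le[OF dlr]] b by blast
      thus ?thesis using eps by (simp add: P0)
    qed
    have "b = w - (w - b)" by simp
    hence "v b \<le> max (v w) (v (w - b))" by (metis v_diff)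
    hence "v b \<le> r" using w dlr unfolding dl_def by auto
    thus ?thesis using b main dlr unfolding b_def[symmetric] dl_def[symmetric] by blast
  qed
  define zs where "zs = rec_nat z0 (\<lambda>j w. closest (?P (n1 + Suc j)) w)"
  have zs0: "zs 0 = z0" unfolding zs_def by simp
  have zsS: "zs (Suc j) = closest (?P (Suc (n1 + j))) (zs j)" for j unfolding zs_def by simp
  have inv: "poly (?P (n1 + j)) (zs j) = 0 \<and> v (zs j) \<le> r" for j
  proof (induction j)
    case 0 thus ?case using z0 zs0 by simp
  next
    case (Suc j)
    thus ?case using step[of "n1 + j" "zs j"] zsS[of j] by simp
  qed
  define dl where "dl j = v (zs j - zs (Suc j))" for j
  have dlr: "dl j < r" and dlb: "v (a 0) * (dl j / r) ^ Suc (n1 + j) \<le> v (a (Suc (n1 + j))) * r ^ Suc (n1 + j)" for j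
    using step[of "n1 + j" "zs j"] inv[of j] zsS[of j] unfolding dl_def by auto
  have dl0: "\<forall>e>0. \<exists>J. \<forall>j\<ge>J. dl j < e"
  proof (intro allI impI)
    fix e :: real assume e: "e > 0"
    define e' where "e' = min e r"
    have e': "e' > 0" "e' \<le> e" "e' \<le> r" unfolding e'_def using e r0 by auto
    define rho where "rho = r * (r / e')"
    have rho: "rho > 0" unfolding rho_def using r0 e' by simp
    obtain J where J: "\<forall>n\<ge>J. v (a n) * rho ^ n < v (a 0)" using vca rho va0 unfolding vc_def by blast
    have "dl j < e'" if "j \<ge> J" for j
    proof (rule ccontr)
      assume "\<not> dl j < e'"
      hence ge: "e' \<le> dl j" by simp
      define n where "n = Suc (n1 + j)"
      have "(e' / r) ^ n \<le> (dl j / r) ^ n" using ge e' r0 by (intro power_mono divide_right_mono) auto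
      hence "v (a 0) * (e' / r) ^ n \<le> v (a n) * r ^ n"
        using dlb[of j] va0 unfolding n_def by (meson mult_left_mono less_imp_le order_trans)
      hence "v (a 0) * (e' / r) ^ n * (r / e') ^ n \<le> v (a n) * r ^ n * (r / e') ^ n"
        using e' r0 by (intro mult_right_mono) auto
      moreover have "(e' / r) ^ n * (r / e') ^ n = 1"
        using e' r0 by (simp add: power_mult_distrib[symmetric])
      moreover have "r ^ n * (r / e') ^ n = rho ^ n" unfolding rho_def by (simp only: power_mult_distrib)
      ultimately have "v (a 0) \<le> v (a n) * rho ^ n" by (simp add: mult.assoc)
      moreover have "n \<ge> J" using that unfolding n_def by simp
      ultimately show False using J by fastforce
    qed
    thus "\<exists>J. \<forall>j\<ge>J. dl j < e" using e' by (meson less_le_trans)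
  qed
  have cauchy: "v_cauchy v zs"
    unfolding v_cauchy_def
  proof (intro allI impI)
    fix e :: real assume e: "e > 0"
    obtain J where J: "\<forall>j\<ge>J. dl j < e" using dl0 e by blast
    have fwd: "v (zs j - zs (j + m)) < e" if "j \<ge> J" for j m
    proof (induction m)
      case 0 thus ?case using e by simp
    next
      case (Suc m)
      have eq: "zs j - zs (j + Suc m) = (zs j - zs (j + m)) + (zs (j + m) - zs (Suc (j + m)))" by simp
      have "v (zs (j + m) - zs (Suc (j + m))) < e" using J that unfolding dl_def by auto
      thus ?case unfolding eq using Suc by (intro v_add_lt)
    qed
    have "v (zs m - zs n) < e" if "m \<ge> J" "n \<ge> J" for m n
    proof (cases "m \<le> n")
      case True
      thus ?thesis using fwd[of m "n - m"] that by simp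
    next
      case False
      thus ?thesis using fwd[of n "m - n"] that v_commute by simp
    qed
    thus "\<exists>N. \<forall>m\<ge>N. \<forall>n\<ge>N. v (zs m - zs n) < e" by blast
  qed
  obtain zeta where zeta: "v_tendsto v zs zeta" using comp cauchy unfolding v_complete_def by blast
  have vzeta: "v zeta \<le> r"
  proof -
    obtain j where j: "v (zs j - zeta) < r" using zeta r0 unfolding vt_iff by blast
    have "zeta = zs j - (zs j - zeta)" by simp
    hence "v zeta \<le> max (v (zs j)) (v (zs j - zeta))" by (metis v_diff)
    thus ?thesis using inv[of j] j by auto
  qed
  obtain B where B: "B \<ge> 0" "\<forall>i. v (a i) * r ^ i \<le> B" using vc_bounded[OF vca r0] by blast
  have diffb: "v (poly (?P n) zeta - poly (?P n) w) \<le> B * v (zeta - w) / r" if "v w \<le> r" for n w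
  proof -
    have "poly (?P n) zeta - poly (?P n) w = (\<Sum>i\<le>n. a i * (zeta ^ i - w ^ i))"
      unfolding poly_Ptr by (simp add: sum_subtractf right_diff_distrib)
    also have "v \<dots> \<le> B * v (zeta - w) / r"
    proof (rule v_sum_le)
      fix i assume "i \<in> {..n}"
      show "v (a i * (zeta ^ i - w ^ i)) \<le> B * v (zeta - w) / r"
      proof (cases i)
        case 0 thus ?thesis using B r0 by simp
      next
        case (Suc i')
        have "v (a i * (zeta ^ i - w ^ i)) = v (a i) * v (zeta ^ Suc i' - w ^ Suc i')"
          using Suc by (simp add: v_mult)
        also have "\<dots> \<le> v (a i) * (v (zeta - w) * r ^ i')"
          using v_pow_diff[OF vzeta that] by (intro mult_left_mono) auto
        also have "\<dots> = (v (a i) * r ^ i) * v (zeta - w) / r" using Suc r0 by (simp add: field_simps)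
        also have "\<dots> \<le> B * v (zeta - w) / r"
          using B r0 by (intro divide_right_mono mult_right_mono) auto
        finally show ?thesis .
      qed
    qed (use B r0 in auto)
    finally show ?thesis .
  qed
  have "v (f zeta) < e" if e: "e > 0" for e
  proof -
    obtain J1 where J1: "\<forall>j\<ge>J1. v (zs j - zeta) < e * r / (B + 1)"
      using zeta e r0 B unfolding vt_iff by (metis add_nonneg_pos divide_pos_pos mult_pos_pos zero_less_one)
    obtain J2 where J2: "\<forall>n\<ge>J2. v (psum a zeta n - f zeta) < e" using a e unfolding rep_def vt_iff by blast
    define j where "j = J1 + J2"
    define n where "n = n1 + j"
    have 1: "v (psum a zeta (Suc n) - f zeta) < e" using J2 unfolding n_def j_def by auto
    have 2: "v (poly (?P n) zeta - poly (?P n) (zs j)) < e"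
    proof -
      have "v (poly (?P n) zeta - poly (?P n) (zs j)) \<le> B * v (zeta - zs j) / r"
        using diffb inv[of j] by blast
      also have "\<dots> < e"
      proof -
        have "v (zeta - zs j) < e * r / (B + 1)" using J1 v_commute unfolding j_def by (metis le_add1)
        hence "B * v (zeta - zs j) \<le> B * (e * r / (B + 1))" using B by (intro mult_left_mono) auto
        also have "\<dots> < e * r" using B e r0 by (simp add: field_simps)
        finally show ?thesis using r0 by (simp add: field_simps)
      qed
      finally show ?thesis .
    qed
    have "f zeta = (poly (?P n) zeta - poly (?P n) (zs j)) - (psum a zeta (Suc n) - f zeta)"
      using inv[of j] unfolding n_def poly_Ptr_psum by simp
    thus ?thesis using 1 2 by (metis v_diff le_less_trans max_less_iff_conj)
  qed
  hence "\<not> v (f zeta) > 0" by (metis less_irrefl)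
  hence "v (f zeta) = 0" using v_nonneg[of "f zeta"] by linarith
  thus False using nz by simp
qed

lemma zero_free_const:
  assumes "ent f" "\<forall>z. f z \<noteq> 0" shows "\<exists>c. \<forall>z. f z = c"
proof -
  obtain a where a: "rep a f" using assms unfolding ent_def by blast
  show ?thesis using rep_coeffs_const[OF a zero_free_coeffs[OF a assms(2)]] by blast
qed

end


lemma coeff_mult_1: "coeff (p * q) 1 = coeff p 0 * coeff q 1 + coeff p 1 * coeff q 0"
  unfolding coeff_mult by (simp add: atMost_Suc add.commute)

lemma lin_pow_coeff0: "coeff ([:a, b:] ^ i) 0 = a ^ i"
  by (induction i) (auto simp: coeff_mult_0)

lemma lin_pow_coeff1: "coeff ([:a, b:] ^ i) 1 = of_nat i * a ^ (i - 1) * (b :: 'a :: comm_ring_1)"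
proof (induction i)
  case 0 thus ?case by simp
next
  case (Suc i)
  have "coeff ([:a, b:] ^ Suc i) 1 = a * coeff ([:a, b:] ^ i) 1 + b * coeff ([:a, b:] ^ i) 0"
    by (simp only: power_Suc coeff_mult_1) simp
  also have "\<dots> = a * (of_nat i * a ^ (i - 1) * b) + b * a ^ i" using Suc by (simp add: lin_pow_coeff0)
  also have "\<dots> = of_nat (Suc i) * a ^ (Suc i - 1) * b"
  proof (cases i)
    case 0 thus ?thesis by simp
  next
    case (Suc i') thus ?thesis by (simp add: algebra_simps)
  qed
  finally show ?case .
qed

lemma lin_pow_degree: "degree ([:a, b:] ^ i) \<le> i"
  using degree_power_le[of "[:a, b:]" i] by (simp add: order_trans)

lemma coeff_mult_top:
  assumes "degree p \<le> m" "degree q \<le> n"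
  shows "coeff (p * q) (m + n) = coeff p m * coeff q n"
proof -
  have "coeff (p * q) (m + n) = (\<Sum>i\<le>m + n. if i = m then coeff p m * coeff q n else 0)"
    unfolding coeff_mult
  proof (intro sum.cong refl)
    fix i assume "i \<in> {..m + n}"
    show "coeff p i * coeff q (m + n - i) = (if i = m then coeff p m * coeff q n else 0)"
    proof (cases "i < m")
      case True
      hence "coeff q (m + n - i) = 0" using assms(2) by (intro coeff_eq_0) auto
      thus ?thesis using True by simp
    next
      case False
      show ?thesis
      proof (cases "i = m")
        case False
        hence "coeff p i = 0" using \<open>\<not> i < m\<close> assms(1) by (intro coeff_eq_0) auto
        thus ?thesis using False by simp
      qed simp
    qed
  qed
  also have "\<dots> = coeff p m * coeff q n" by (subst sum.delta) auto
  finally show ?thesis .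
qed

lemma lin_pow_top: "coeff ([:a, b:] ^ i) i = b ^ i"
proof (induction i)
  case 0 thus ?case by simp
next
  case (Suc i)
  have "coeff ([:a, b:] * [:a, b:] ^ i) (1 + i) = coeff [:a, b:] 1 * coeff ([:a, b:] ^ i) i"
    by (rule coeff_mult_top) (auto intro: lin_pow_degree)
  thus ?case using Suc by simp
qed

definition hpoly :: "nat \<Rightarrow> (nat \<Rightarrow> nat \<Rightarrow> 'a::field) \<Rightarrow> 'a pt \<Rightarrow> 'a pt \<Rightarrow> 'a poly" where
  "hpoly d c P Q = (\<Sum>i\<le>d. \<Sum>j\<le>d-i. smult (c i j)
     ([:fst P, fst Q:] ^ i * [:fst (snd P), fst (snd Q):] ^ j * [:snd (snd P), snd (snd Q):] ^ (d-i-j)))"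

lemma poly_hpoly: "poly (hpoly d c P Q) y = hp_eval d c (padd P (pscale y Q))"
  by (cases P; cases Q) (simp add: hpoly_def hp_eval_def padd_def pscale_def poly_sum algebra_simps)

lemma scale_mono3: fixes cc s x0 x1 x2 :: "'a::comm_ring_1" assumes "i \<le> d" "j \<le> d - i"
  shows "cc * (s * x0) ^ i * (s * x1) ^ j * (s * x2) ^ (d - i - j) = s ^ d * (cc * x0 ^ i * x1 ^ j * x2 ^ (d - i - j))"
proof -
  have e: "i + j + (d - i - j) = d" using assms by simp
  have "s ^ (i + j + (d - i - j)) = s ^ i * s ^ j * s ^ (d - i - j)" by (simp only: power_add)
  hence "s ^ d = s ^ i * s ^ j * s ^ (d - i - j)" unfolding e .
  thus ?thesis by (simp add: power_mult_distrib algebra_simps)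
qed

lemma hp_eval_scale: "hp_eval d c (pscale s p) = s ^ d * hp_eval d c p"
proof (cases p)
  case (fields x0 x1 x2)
  have "hp_eval d c (pscale s p) = (\<Sum>i\<le>d. \<Sum>j\<le>d-i. s ^ d * (c i j * x0 ^ i * x1 ^ j * x2 ^ (d-i-j)))"
    unfolding fields hp_eval_def pscale_def prod.case fst_conv snd_conv
    by (intro sum.cong refl scale_mono3) auto
  also have "\<dots> = s ^ d * hp_eval d c p" unfolding fields hp_eval_def by (simp add: sum_distrib_left)
  finally show ?thesis .
qed

lemma degree_hpoly: "degree (hpoly d c P Q) \<le> d"
proof (rule degree_le, intro allI impI)
  fix n assume n: "d < n"
  show "coeff (hpoly d c P Q) n = 0"
    unfolding hpoly_def coeff_sum coeff_smult
  proof (intro sum.neutral ballI)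
    fix i j assume i: "i \<in> {..d}" and j: "j \<in> {..d - i}"
    let ?A = "[:fst P, fst Q:] ^ i" and ?B = "[:fst (snd P), fst (snd Q):] ^ j"
      and ?C = "[:snd (snd P), snd (snd Q):] ^ (d-i-j)"
    have "degree (?A * ?B * ?C) \<le> i + j + (d - i - j)"
      using lin_pow_degree by (intro order_trans[OF degree_mult_le] add_mono) auto
    also have "\<dots> = d" using i j by simp
    finally show "c i j * coeff (?A * ?B * ?C) n = 0" using n by (simp add: coeff_eq_0)
  qed
qed

lemma top1:
  fixes cc :: "'a::comm_ring_1"
  assumes "i + j + k = d"
  shows "coeff (smult cc ([:p0, q0:] ^ i * [:p1, q1:] ^ j * [:p2, q2:] ^ k)) d = cc * q0 ^ i * q1 ^ j * q2 ^ k"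
proof -
  have "coeff ([:p0, q0:] ^ i * [:p1, q1:] ^ j * [:p2, q2:] ^ k) ((i + j) + k)
      = coeff ([:p0, q0:] ^ i * [:p1, q1:] ^ j) (i + j) * coeff ([:p2, q2:] ^ k) k"
    by (rule coeff_mult_top) (auto intro: order_trans[OF degree_mult_le] add_mono lin_pow_degree)
  also have "coeff ([:p0, q0:] ^ i * [:p1, q1:] ^ j) (i + j) = q0 ^ i * q1 ^ j"
    by (subst coeff_mult_top) (auto intro: lin_pow_degree simp: lin_pow_top)
  finally show ?thesis using assms by (simp add: lin_pow_top mult.assoc)
qed

lemma coeff_hpoly_top: "coeff (hpoly d c P Q) d = hp_eval d c Q"
proof (cases Q)
  case (fields q0 q1 q2)
  show ?thesis unfolding hpoly_def coeff_sum fields hp_eval_def prod.case fst_conv snd_conv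
    by (intro sum.cong refl top1) auto
qed

lemma term1: "coeff (smult (cc::'a::comm_ring_1) ([:p0, q0:] ^ i * [:p1, q1:] ^ j * [:p2, q2:] ^ k)) 1 =
   cc * of_nat i * p0 ^ (i - 1) * p1 ^ j * p2 ^ k * q0 +
   cc * p0 ^ i * of_nat j * p1 ^ (j - 1) * p2 ^ k * q1 +
   cc * p0 ^ i * p1 ^ j * of_nat k * p2 ^ (k - 1) * q2"
  by (simp only: coeff_smult coeff_mult_1 coeff_mult_0 lin_pow_coeff0 lin_pow_coeff1) (simp add: algebra_simps)

lemma coeff_hpoly_1: "coeff (hpoly d c P Q) 1 = pdot (hp_grad d c P) Q"
proof (cases P; cases Q)
  fix p0 p1 p2 q0 q1 q2 assume P: "P = (p0, p1, p2)" and Q: "Q = (q0, q1, q2)"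
  have "coeff (hpoly d c P Q) 1 = (\<Sum>i\<le>d. \<Sum>j\<le>d-i.
      c i j * of_nat i * p0 ^ (i - 1) * p1 ^ j * p2 ^ (d - i - j) * q0
    + c i j * p0 ^ i * of_nat j * p1 ^ (j - 1) * p2 ^ (d - i - j) * q1
    + c i j * p0 ^ i * p1 ^ j * of_nat (d - i - j) * p2 ^ (d - i - j - 1) * q2)"
    unfolding hpoly_def coeff_sum P Q fst_conv snd_conv term1 ..
  also have "\<dots> = pdot (hp_grad d c P) Q"
    unfolding P Q pdot_def hp_grad_def hp_d0_def hp_d1_def hp_d2_def prod.case fst_conv snd_conv
    by (simp only: sum_distrib_right sum.distrib)
  finally show ?thesis .
qed

context NA begin

lemma poly_ext: assumes "\<And>y. poly p y = poly q (y::'a)" shows "p = q"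
proof (rule ccontr)
  assume "p \<noteq> q"
  hence "p - q \<noteq> 0" by simp
  hence "finite {x. poly (p - q) x = 0}" by (rule poly_roots_finite)
  moreover have "{x. poly (p - q) x = 0} = UNIV" using assms by auto
  ultimately show False using infinite_UNIV_field by simp
qed

lemma grad_dir_zero:
  fixes P Q :: "'a pt"
  assumes "\<And>y. hp_eval d c (padd P (pscale y Q)) = 0"
  shows "pdot (hp_grad d c P) Q = 0"
proof -
  have "hpoly d c P Q = 0" by (rule poly_ext) (simp add: poly_hpoly assms)
  thus ?thesis using coeff_hpoly_1[of d c P Q] by simp
qed

lemma euler_zero:
  fixes P :: "'a pt"
  assumes "hp_eval d c P = 0"
  shows "pdot (hp_grad d c P) P = 0"
proof (rule grad_dir_zero)
  fix y
  have "padd P (pscale y P) = pscale (1 + y) P" by (cases P) (simp add: padd_def pscale_def algebra_simps)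
  thus "hp_eval d c (padd P (pscale y P)) = 0" using assms by (simp add: hp_eval_scale)
qed

end


lemma pdot3[simp]: "pdot (x0, x1, x2) (y0, y1, y2) = x0 * y0 + x1 * y1 + x2 * y2"
  by (simp add: pdot_def)
lemma padd3[simp]: "padd (x0, x1, x2) (y0, y1, y2) = (x0 + y0, x1 + y1, x2 + y2)"
  by (simp add: padd_def)
lemma pscale3[simp]: "pscale s (x0, x1, x2) = (s * x0, s * x1, s * x2)"
  by (simp add: pscale_def)
lemma pdot_padd: "pdot g (padd x y) = pdot g x + pdot g y"
  by (cases g; cases x; cases y) (simp add: algebra_simps)
lemma pdot_pscale: "pdot g (pscale s x) = s * pdot g x"
  by (cases g; cases x) (simp add: algebra_simps)
lemma pdot_comm: "pdot x y = pdot y x"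
  by (cases x; cases y) (simp add: algebra_simps)
lemma padd_pdot: "pdot (padd x y) g = pdot x g + pdot y g"
  by (cases g; cases x; cases y) (simp add: algebra_simps)
lemma pscale_pdot: "pdot (pscale s x) g = s * pdot x g"
  by (cases g; cases x) (simp add: algebra_simps)

lemma recomb1:
  fixes u w :: "'a::field pt"
  assumes "t0 \<noteq> 0"
  shows "padd (pscale (al + - (s0 / t0) * be) u) (pscale (1 / t0 * be) (padd (pscale s0 u) (pscale t0 w)))
       = padd (pscale al u) (pscale be w)"
  using assms by (cases u; cases w) (simp add: field_simps)

lemma recomb2:
  fixes u w :: "'a::field pt"
  assumes "s0 \<noteq> 0"
  shows "padd (pscale be w) (pscale (1 / s0 * al) (padd (pscale s0 u) (pscale 0 w)))
       = padd (pscale al u) (pscale be w)"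
  using assms by (cases u; cases w) (simp add: field_simps)

definition basis :: "'a::field pt \<Rightarrow> 'a pt \<Rightarrow> 'a pt \<Rightarrow> 'a pt \<Rightarrow> 'a pt \<Rightarrow> 'a pt \<Rightarrow> bool" where
  "basis a u w e S T \<longleftrightarrow> pdot a u = 0 \<and> pdot a w = 0 \<and> pdot a e = 1 \<and> pdot S u = 1 \<and> pdot S w = 0 \<and>
     pdot T u = 0 \<and> pdot T w = 1 \<and>
     (\<forall>p. p = padd (padd (pscale (pdot S p) u) (pscale (pdot T p) w)) (pscale (pdot a p) e))"

lemma basis_D: "basis a u w e S T \<Longrightarrow> pdot a u = 0 \<and> pdot a w = 0 \<and> pdot a e = 1 \<and> pdot S u = 1 \<and>
   pdot S w = 0 \<and> pdot T u = 0 \<and> pdot T w = 1"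
  unfolding basis_def by (elim conjE) (intro conjI; assumption)

lemma basis_dec: "basis a u w e S T \<Longrightarrow> p = padd (padd (pscale (pdot S p) u) (pscale (pdot T p) w)) (pscale (pdot a p) e)"
  unfolding basis_def apply (elim conjE) apply (erule allE[where x=p]) apply assumption done

lemma basis_exists:
  fixes a :: "'a::field pt"
  assumes "a \<noteq> (0, 0, 0)" shows "\<exists>u w e S T. basis a u w e S T"
proof (cases a)
  case (fields a0 a1 a2)
  show ?thesis
  proof (cases "a0 \<noteq> 0")
    case True
    have "basis a (-a1/a0, 1, 0) (-a2/a0, 0, 1) (1/a0, 0, 0) (0, 1, 0) (0, 0, 1)"
      unfolding basis_def fields using True by (auto simp: field_simps)
    thus ?thesis by blast
  next
    case F0: False
    show ?thesis
    proof (cases "a1 \<noteq> 0")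
      case True
      have "basis a (1, -a0/a1, 0) (0, -a2/a1, 1) (0, 1/a1, 0) (1, 0, 0) (0, 0, 1)"
        unfolding basis_def fields using True F0 by (auto simp: field_simps)
      thus ?thesis by blast
    next
      case F1: False
      hence T: "a2 \<noteq> 0" using assms F0 fields by auto
      have "basis a (1, 0, -a0/a2) (0, 1, -a1/a2) (0, 0, 1/a2) (1, 0, 0) (0, 1, 0)"
        unfolding basis_def fields using T F0 F1 by (auto simp: field_simps)
      thus ?thesis by blast
    qed
  qed
qed

lemma basis_plane:
  assumes "basis a u w e S T" "pdot a q = 0"
  shows "q = padd (pscale (pdot S q) u) (pscale (pdot T q) w)"
proof -
  have "q = padd (padd (pscale (pdot S q) u) (pscale (pdot T q) w)) (pscale (pdot a q) e)"
    by (rule basis_dec[OF assms(1)])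
  thus ?thesis using assms(2) by (cases q; cases u; cases w; cases e) simp
qed

lemma basis_change:
  assumes b: "basis a u w e S T" and w': "pdot a w' = 0" "w' \<noteq> (0, 0, 0)"
  shows "\<exists>u' S' T'. basis a u' w' e S' T'"
proof -
  define s0 where "s0 = pdot S w'"
  define t0 where "t0 = pdot T w'"
  have w'eq: "w' = padd (pscale s0 u) (pscale t0 w)" using basis_plane[OF b w'(1)] unfolding s0_def t0_def .
  have dec: "\<forall>p. p = padd (padd (pscale (pdot S p) u) (pscale (pdot T p) w)) (pscale (pdot a p) e)"
    by (intro allI) (rule basis_dec[OF b])
  show ?thesis
  proof (cases "t0 = 0")
    case False
    define S' where "S' = padd S (pscale (- s0 / t0) T)"
    define T' where "T' = pscale (1 / t0) T"
    have "basis a u w' e S' T'"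
      unfolding basis_def
    proof (intro conjI allI)
      show "pdot a u = 0" "pdot a w' = 0" "pdot a e = 1" using basis_D[OF b] w' by auto
      show "pdot S' u = 1" "pdot S' w' = 0" "pdot T' u = 0" "pdot T' w' = 1"
        using basis_D[OF b] False unfolding S'_def T'_def w'eq by (auto simp: pdot_padd pdot_pscale padd_pdot pscale_pdot field_simps)
      fix p
      have "p = padd (padd (pscale (pdot S p) u) (pscale (pdot T p) w)) (pscale (pdot a p) e)" using dec by blast
      also have "\<dots> = padd (padd (pscale (pdot S' p) u) (pscale (pdot T' p) w')) (pscale (pdot a p) e)"
        unfolding S'_def T'_def w'eq padd_pdot pscale_pdot using recomb1[OF False] by simp
      finally show "p = padd (padd (pscale (pdot S' p) u) (pscale (pdot T' p) w')) (pscale (pdot a p) e)" .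
    qed
    thus ?thesis by blast
  next
    case True
    hence s0: "s0 \<noteq> 0" using w' w'eq by (cases u; cases w) auto
    define S' where "S' = T"
    define T' where "T' = pscale (1 / s0) S"
    have "basis a w w' e S' T'"
      unfolding basis_def
    proof (intro conjI allI)
      show "pdot a w = 0" "pdot a w' = 0" "pdot a e = 1" using basis_D[OF b] w' by auto
      show "pdot S' w = 1" "pdot S' w' = 0" "pdot T' w = 0" "pdot T' w' = 1"
        using basis_D[OF b] True s0 unfolding S'_def T'_def w'eq by (auto simp: pdot_padd pdot_pscale padd_pdot pscale_pdot field_simps)
      fix p
      have "p = padd (padd (pscale (pdot S p) u) (pscale (pdot T p) w)) (pscale (pdot a p) e)" using dec by blast
      also have "\<dots> = padd (padd (pscale (pdot S' p) w) (pscale (pdot T' p) w')) (pscale (pdot a p) e)"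
        unfolding S'_def T'_def w'eq pscale_pdot True using recomb2[OF s0] by simp
      finally show "p = padd (padd (pscale (pdot S' p) w) (pscale (pdot T' p) w')) (pscale (pdot a p) e)" .
    qed
    thus ?thesis by blast
  qed
qed

lemma basis_grad:
  assumes b: "basis a u w e S T" and "pdot g u = 0" "pdot g w = 0"
  shows "g = pscale (pdot g e) a"
proof -
  have dec: "\<forall>p. p = padd (padd (pscale (pdot S p) u) (pscale (pdot T p) w)) (pscale (pdot a p) e)"
    by (intro allI) (rule basis_dec[OF b])
  have lin: "pdot g p = pdot g e * pdot a p" for p
  proof -
    have "pdot g p = pdot g (padd (padd (pscale (pdot S p) u) (pscale (pdot T p) w)) (pscale (pdot a p) e))"
      using arg_cong[OF dec[rule_format, of p], of "pdot g"] .
    also have "\<dots> = pdot g e * pdot a p" using assms by (simp add: pdot_padd pdot_pscale)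
    finally show ?thesis .
  qed
  define k where "k = pdot g e"
  have lin': "pdot g p = k * pdot a p" for p unfolding k_def by (rule lin)
  obtain g0 g1 g2 where g: "g = (g0, g1, g2)" by (cases g)
  obtain a0 a1 a2 where a: "a = (a0, a1, a2)" by (cases a)
  have "g0 = k * a0" using lin'[of "(1,0,0)"] unfolding g a by simp
  moreover have "g1 = k * a1" using lin'[of "(0,1,0)"] unfolding g a by simp
  moreover have "g2 = k * a2" using lin'[of "(0,0,1)"] unfolding g a by simp
  ultimately have "g = pscale k a" unfolding g a by simp
  thus ?thesis unfolding k_def .
qed

lemma basis_nz: assumes "basis a u w e S T" shows "padd u (pscale x w) \<noteq> (0, 0, 0)"
proof
  assume h: "padd u (pscale x w) = (0, 0, 0)"
  have "pdot S (padd u (pscale x w)) = 1" using basis_D[OF assms] by (simp add: pdot_padd pdot_pscale)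
  thus False unfolding h by (cases S) simp
qed

lemma basis_perp: "basis a u w e S T \<Longrightarrow> pdot a (padd (pscale s u) (pscale t w)) = 0"
  by (drule basis_D) (simp add: pdot_padd pdot_pscale)


lemma pscale_zero3[simp]: "pscale 0 p = (0, 0, 0)" by (cases p) simp
lemma pscale_one[simp]: "pscale 1 p = p" by (cases p) simp
lemma padd_zero3[simp]: "padd p (0, 0, 0) = p" "padd (0, 0, 0) p = p" by (cases p; simp)+

lemma hp_zero: "d \<ge> 1 \<Longrightarrow> hp_eval d c (0, 0, 0) = (0::'a::field)"
  using hp_eval_scale[of d c 0 "(0,0,0)"] by (simp add: power_0_left)

lemma prod_list_scale: "(\<Prod>x\<leftarrow>xs. s * g x) = s ^ length xs * (\<Prod>x\<leftarrow>xs. g x :: 'a::comm_ring_1)"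
  by (induction xs) (auto simp: algebra_simps)

lemma prod_list_const: "(\<Prod>x\<leftarrow>xs. s) = s ^ length xs"
  by (induction xs) auto

context NAC begin

lemma grad_perp_false:
  fixes c :: "nat \<Rightarrow> nat \<Rightarrow> 'a" and a :: "'a pt"
  assumes ns: "nonsingular_curve d c" and tr: "transversal d c a" and b: "basis a u w e S T"
    and P: "P \<noteq> (0, 0, 0)" "hp_eval d c P = 0" "pdot a P = 0"
    and g: "pdot (hp_grad d c P) u = 0" "pdot (hp_grad d c P) w = 0"
  shows False
proof -
  define k where "k = pdot (hp_grad d c P) e"
  have gk: "hp_grad d c P = pscale k a" unfolding k_def by (rule basis_grad[OF b g])
  show False
  proof (cases "k = 0")
    case True
    hence "hp_grad d c P = (0, 0, 0)" using gk by simp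
    thus False using ns P unfolding nonsingular_curve_def by blast
  next
    case False
    hence "proportional a (hp_grad d c P)" unfolding proportional_def using gk by blast
    thus False using tr P unfolding transversal_def by blast
  qed
qed

lemma exists_nonzero_on_L:
  fixes c :: "nat \<Rightarrow> nat \<Rightarrow> 'a" and a :: "'a pt"
  assumes d: "d \<ge> 1" and ns: "nonsingular_curve d c" and tr: "transversal d c a" and b: "basis a u w e S T"
  shows "\<exists>w'. pdot a w' = 0 \<and> hp_eval d c w' \<noteq> 0"
proof (rule ccontr)
  assume "\<not> ?thesis"
  hence Z: "\<And>q. pdot a q = 0 \<Longrightarrow> hp_eval d c q = 0" by blast
  have bd: "pdot a u = 0" "pdot a w = 0" using basis_D[OF b] by auto
  have u0: "u \<noteq> (0, 0, 0)" using basis_nz[OF b, of 0] by simp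
  have "pdot (hp_grad d c u) Q = 0" if "pdot a Q = 0" for Q
    by (rule grad_dir_zero, rule Z) (simp add: pdot_padd pdot_pscale bd that)
  hence "pdot (hp_grad d c u) u = 0" "pdot (hp_grad d c u) w = 0" using bd by auto
  thus False using grad_perp_false[OF ns tr b u0 Z[OF bd(1)] bd(1)] by blast
qed

lemma curve_structure:
  fixes c :: "nat \<Rightarrow> nat \<Rightarrow> 'a" and a :: "'a pt"
  assumes d: "d \<ge> 2" and ns: "nonsingular_curve d c" and a0: "a \<noteq> (0, 0, 0)" and tr: "transversal d c a"
  shows "\<exists>u w e S T xs. basis a u w e S T \<and> hp_eval d c w \<noteq> 0 \<and> length xs = d \<and> distinct xs \<and>
     (\<forall>x\<in>set xs. hp_eval d c (padd u (pscale x w)) = 0) \<and>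
     (\<forall>s t. hp_eval d c (padd (pscale s u) (pscale t w)) = hp_eval d c w * (\<Prod>x\<leftarrow>xs. t - x * s))"
proof -
  obtain u0 w0 e S0 T0 where b0: "basis a u0 w0 e S0 T0" using basis_exists[OF a0] by blast
  obtain w where w: "pdot a w = 0" "hp_eval d c w \<noteq> 0" using exists_nonzero_on_L[OF _ ns tr b0] d by auto
  have wnz: "w \<noteq> (0, 0, 0)" using w hp_zero[of d c] d by auto
  obtain u S T where b: "basis a u w e S T" using basis_change[OF b0 w(1) wnz] by blast
  define Phi where "Phi = hpoly d c u w"
  have polyPhi: "poly Phi y = hp_eval d c (padd u (pscale y w))" for y unfolding Phi_def by (rule poly_hpoly)
  have cd: "coeff Phi d = hp_eval d c w" unfolding Phi_def by (rule coeff_hpoly_top)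
  have dl: "degree Phi \<le> d" unfolding Phi_def by (rule degree_hpoly)
  have Phinz: "Phi \<noteq> 0" using cd w by auto
  have degd: "degree Phi = d" using dl le_degree[of Phi d] cd w by auto
  have lc: "lead_coeff Phi = hp_eval d c w" using degd cd by simp
  obtain xs where len: "length xs = d" and xs: "Phi = smult (hp_eval d c w) (\<Prod>x\<leftarrow>xs. [:-x, 1:])"
    using factorization[OF Phinz] degd lc by auto
  have roots: "\<forall>x\<in>set xs. hp_eval d c (padd u (pscale x w)) = 0"
    using roots_in_list[OF xs] polyPhi by auto
  have prodf: "hp_eval d c (padd (pscale s u) (pscale t w)) = hp_eval d c w * (\<Prod>x\<leftarrow>xs. t - x * s)" for s t
  proof (cases "s = 0")
    case True
    have "hp_eval d c (padd (pscale s u) (pscale t w)) = t ^ d * hp_eval d c w"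
      using True by (simp add: hp_eval_scale)
    thus ?thesis using True len by (simp add: prod_list_const)
  next
    case False
    have "padd (pscale s u) (pscale t w) = pscale s (padd u (pscale (t / s) w))"
      using False by (cases u; cases w) (simp add: field_simps)
    hence "hp_eval d c (padd (pscale s u) (pscale t w)) = s ^ d * poly Phi (t / s)"
      by (simp add: hp_eval_scale polyPhi)
    also have "\<dots> = s ^ d * (hp_eval d c w * (\<Prod>x\<leftarrow>xs. t / s - x))"
      by (subst xs) (simp only: poly_smult poly_prod_list_lin)
    also have "\<dots> = hp_eval d c w * (s ^ length xs * (\<Prod>x\<leftarrow>xs. t / s - x))" using len by simp
    also have "s ^ length xs * (\<Prod>x\<leftarrow>xs. t / s - x) = (\<Prod>x\<leftarrow>xs. s * (t / s - x))"
      by (rule prod_list_scale[symmetric])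
    also have "\<dots> = (\<Prod>x\<leftarrow>xs. t - x * s)"
      using False by (intro arg_cong[where f = prod_list] map_cong) (auto simp: field_simps)
    finally show ?thesis .
  qed
  have dist: "distinct xs"
  proof (rule ccontr)
    assume "\<not> distinct xs"
    then obtain ys y zs ws where dec: "xs = ys @ [y] @ zs @ [y] @ ws" using not_distinct_decomp by blast
    define R where "R = (\<Prod>x\<leftarrow>ys @ zs @ ws. [:-x, 1:])"
    have prodR: "(\<Prod>x\<leftarrow>xs. [:-x, 1:]) = [:-y, 1:] * [:-y, 1:] * R"
      unfolding dec R_def map_append prod_list.append list.map prod_list.Cons prod_list.Nil
      by (simp only: mult_1_right mult_1_left ac_simps)
    define P where "P = padd u (pscale y w)"
    have ymem: "y \<in> set xs" using dec by simp
    have FP: "hp_eval d c P = 0" using roots ymem unfolding P_def by blast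
    have aP: "pdot a P = 0" unfolding P_def using basis_perp[OF b, of 1 y] by simp
    have Pnz: "P \<noteq> (0, 0, 0)" unfolding P_def by (rule basis_nz[OF b])
    have "hpoly d c P w = monom 1 2 * smult (hp_eval d c w) (pcompose R [:y, 1:])"
    proof (rule poly_ext)
      fix t
      have "padd P (pscale t w) = padd u (pscale (y + t) w)" unfolding P_def
        by (cases u; cases w) (simp add: algebra_simps)
      hence "poly (hpoly d c P w) t = poly Phi (y + t)" by (simp add: poly_hpoly polyPhi)
      also have "\<dots> = hp_eval d c w * (t * t * poly R (y + t))"
        by (subst xs) (simp add: prodR algebra_simps)
      also have "\<dots> = poly (monom 1 2 * smult (hp_eval d c w) (pcompose R [:y, 1:])) t"
        by (simp add: poly_monom poly_pcompose power2_eq_square algebra_simps)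
      finally show "poly (hpoly d c P w) t = poly (monom 1 2 * smult (hp_eval d c w) (pcompose R [:y, 1:])) t" .
    qed
    hence "coeff (hpoly d c P w) 1 = 0" by (simp add: coeff_monom_mult)
    hence gw: "pdot (hp_grad d c P) w = 0" by (simp only: coeff_hpoly_1)
    have "pdot (hp_grad d c P) P = 0" by (rule euler_zero[OF FP])
    hence gu: "pdot (hp_grad d c P) u = 0" using gw unfolding P_def by (simp add: pdot_padd pdot_pscale)
    show False using grad_perp_false[OF ns tr b Pnz FP aP gu gw] .
  qed
  show ?thesis using b w(2) len dist roots prodf by blast
qed

end


context NA begin

lemma ent_hp: assumes "ent x0" "ent x1" "ent x2"
  shows "ent (\<lambda>z. hp_eval d c (x0 z, x1 z, x2 z))"
  unfolding hp_eval_def prod.case using assms by (intro ent_sum ent_mult ent_power ent_const)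

lemma ent_lin: assumes "ent x0" "ent x1" "ent x2"
  shows "ent (\<lambda>z. pdot g (x0 z, x1 z, x2 z))"
proof (cases g)
  case (fields g0 g1 g2)
  show ?thesis unfolding fields pdot3 using assms by (intro ent_add ent_mult ent_const)
qed

lemma N_zero: "r > 0 \<Longrightarrow> N r (\<lambda>z. 0) = 0"
  using N_const[of r 0] by simp

lemma N_pow_diff:
  fixes x y :: "'a \<Rightarrow> 'a"
  assumes ex: "ent x" and ey: "ent y" and r: "r > 0" and dl: "N r (\<lambda>z. x z - y z) \<le> dl"
    and Kx: "N r x \<le> K" and Ky: "N r y \<le> K" and K0: "0 \<le> K"
  shows "N r (\<lambda>z. x z ^ n - y z ^ n) \<le> dl * K ^ (n - 1)"
proof (induction n)
  case 0
  have "0 \<le> N r (\<lambda>z. x z - y z)" using ex ey r by (intro N_nonneg) auto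
  hence "0 \<le> dl" using dl by linarith
  thus ?case using N_zero[OF r] by simp
next
  case (Suc n)
  show ?case
  proof (cases n)
    case 0 thus ?thesis using dl by simp
  next
    case (Suc m)
    have eq: "(\<lambda>z. x z ^ Suc n - y z ^ Suc n) = (\<lambda>z. x z * (x z ^ n - y z ^ n) + (x z - y z) * y z ^ n)"
      by (simp add: algebra_simps)
    have "0 \<le> N r (\<lambda>z. x z - y z)" using ex ey r by (intro N_nonneg ent_diff) auto
    hence dl0: "0 \<le> dl" using dl by linarith
    have 1: "N r (\<lambda>z. x z * (x z ^ n - y z ^ n)) \<le> dl * K ^ (Suc n - 1)"
    proof -
      have "N r (\<lambda>z. x z * (x z ^ n - y z ^ n)) = N r x * N r (\<lambda>z. x z ^ n - y z ^ n)"
        using ex ey r by (intro N_mult) auto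
      also have "\<dots> \<le> K * (dl * K ^ (n - 1))"
        using Kx Suc.IH N_nonneg[OF ex r] N_nonneg[OF ent_diff[OF ent_power[OF ex] ent_power[OF ey]] r]
        by (intro mult_mono) auto
      also have "\<dots> = dl * K ^ (Suc n - 1)" using \<open>n = Suc m\<close> by simp
      finally show ?thesis .
    qed
    have 2: "N r (\<lambda>z. (x z - y z) * y z ^ n) \<le> dl * K ^ (Suc n - 1)"
    proof -
      have "N r (\<lambda>z. (x z - y z) * y z ^ n) = N r (\<lambda>z. x z - y z) * N r (\<lambda>z. y z ^ n)"
        using ex ey r by (intro N_mult) auto
      also have "\<dots> = N r (\<lambda>z. x z - y z) * N r y ^ n" using N_power[OF ey r] by simp
      also have "\<dots> \<le> dl * K ^ n"
        using dl Ky N_nonneg[OF ey r] dl0 by (intro mult_mono power_mono) auto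
      finally show ?thesis by simp
    qed
    show ?thesis unfolding eq by (rule N_add_le[OF _ _ r 1 2]) (intro ent_mult ent_diff ent_power ex ey)+
  qed
qed

lemma N_pow_diff_K:
  fixes x y :: "'a \<Rightarrow> 'a"
  assumes ex: "ent x" and ey: "ent y" and r: "r > 0" and dl: "N r (\<lambda>z. x z - y z) \<le> dl"
    and Kx: "N r x \<le> K" and Ky: "N r y \<le> K" and K0: "0 \<le> K"
  shows "N r (\<lambda>z. x z ^ n - y z ^ n) * K ^ m \<le> dl * K ^ (n + m - 1)"
proof (cases n)
  case 0
  have "0 \<le> N r (\<lambda>z. x z - y z)" using ex ey r by (intro N_nonneg) auto
  hence "0 \<le> dl" using dl by linarith
  thus ?thesis using N_zero[OF r] 0 K0 by simp
next
  case (Suc n')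
  have "N r (\<lambda>z. x z ^ n - y z ^ n) * K ^ m \<le> (dl * K ^ (n - 1)) * K ^ m"
    using N_pow_diff[OF assms] K0 by (intro mult_right_mono) auto
  also have "\<dots> = dl * K ^ (n + m - 1)" using Suc by (simp add: power_add)
  finally show ?thesis .
qed

lemma N_mono_diff:
  fixes x0 x1 x2 y0 y1 y2 :: "'a \<Rightarrow> 'a"
  assumes e: "ent x0" "ent x1" "ent x2" "ent y0" "ent y1" "ent y2" and r: "r > 0"
    and dl: "N r (\<lambda>z. x0 z - y0 z) \<le> dl" "N r (\<lambda>z. x1 z - y1 z) \<le> dl" "N r (\<lambda>z. x2 z - y2 z) \<le> dl"
    and K: "N r x0 \<le> K" "N r x1 \<le> K" "N r x2 \<le> K" "N r y0 \<le> K" "N r y1 \<le> K" "N r y2 \<le> K"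
    and K0: "0 \<le> K"
  shows "N r (\<lambda>z. x0 z ^ i * x1 z ^ j * x2 z ^ k - y0 z ^ i * y1 z ^ j * y2 z ^ k) \<le> dl * K ^ (i + j + k - 1)"
proof -
  have "0 \<le> N r (\<lambda>z. x0 z - y0 z)" using e r by (intro N_nonneg ent_diff) auto
  hence dl0: "0 \<le> dl" using dl by linarith
  have eq: "(\<lambda>z. x0 z ^ i * x1 z ^ j * x2 z ^ k - y0 z ^ i * y1 z ^ j * y2 z ^ k) =
    (\<lambda>z. ((x0 z ^ i - y0 z ^ i) * x1 z ^ j * x2 z ^ k + y0 z ^ i * (x1 z ^ j - y1 z ^ j) * x2 z ^ k)
       + y0 z ^ i * y1 z ^ j * (x2 z ^ k - y2 z ^ k))"
    by (simp add: algebra_simps)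
  have NP: "\<And>f n. ent f \<Longrightarrow> N r f \<le> K \<Longrightarrow> N r (\<lambda>z. f z ^ n) \<le> K ^ n"
    using N_power r N_nonneg by (metis power_mono)
  have t1: "N r (\<lambda>z. (x0 z ^ i - y0 z ^ i) * x1 z ^ j * x2 z ^ k) \<le> dl * K ^ (i + j + k - 1)"
  proof -
    have "N r (\<lambda>z. (x0 z ^ i - y0 z ^ i) * x1 z ^ j * x2 z ^ k) =
      N r (\<lambda>z. x0 z ^ i - y0 z ^ i) * N r (\<lambda>z. x1 z ^ j) * N r (\<lambda>z. x2 z ^ k)"
      using e r by (simp add: N_mult ent_diff ent_power ent_mult)
    also have "\<dots> \<le> N r (\<lambda>z. x0 z ^ i - y0 z ^ i) * K ^ j * K ^ k"
      using NP[OF e(2) K(2), of j] NP[OF e(3) K(3), of k] e r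
      by (intro mult_mono N_nonneg ent_diff ent_power ent_mult mult_nonneg_nonneg zero_le_power K0) auto
    also have "\<dots> = N r (\<lambda>z. x0 z ^ i - y0 z ^ i) * K ^ (j + k)" by (simp add: power_add)
    also have "\<dots> \<le> dl * K ^ (i + (j + k) - 1)" by (rule N_pow_diff_K[OF e(1,4) r dl(1) K(1,4) K0])
    finally show ?thesis by (simp add: add.assoc)
  qed
  have t2: "N r (\<lambda>z. y0 z ^ i * (x1 z ^ j - y1 z ^ j) * x2 z ^ k) \<le> dl * K ^ (i + j + k - 1)"
  proof -
    have "N r (\<lambda>z. y0 z ^ i * (x1 z ^ j - y1 z ^ j) * x2 z ^ k) =
      N r (\<lambda>z. x1 z ^ j - y1 z ^ j) * (N r (\<lambda>z. y0 z ^ i) * N r (\<lambda>z. x2 z ^ k))"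
      using e r by (simp add: N_mult ent_diff ent_power ent_mult)
    also have "\<dots> \<le> N r (\<lambda>z. x1 z ^ j - y1 z ^ j) * (K ^ i * K ^ k)"
      using NP[OF e(4) K(4), of i] NP[OF e(3) K(3), of k] e r
      by (intro mult_mono N_nonneg ent_diff ent_power ent_mult mult_nonneg_nonneg zero_le_power K0 order_refl) auto
    also have "\<dots> = N r (\<lambda>z. x1 z ^ j - y1 z ^ j) * K ^ (i + k)" by (simp add: power_add)
    also have "\<dots> \<le> dl * K ^ (j + (i + k) - 1)" by (rule N_pow_diff_K[OF e(2,5) r dl(2) K(2,5) K0])
    finally show ?thesis by (simp add: ac_simps)
  qed
  have t3: "N r (\<lambda>z. y0 z ^ i * y1 z ^ j * (x2 z ^ k - y2 z ^ k)) \<le> dl * K ^ (i + j + k - 1)"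
  proof -
    have "N r (\<lambda>z. y0 z ^ i * y1 z ^ j * (x2 z ^ k - y2 z ^ k)) =
      N r (\<lambda>z. x2 z ^ k - y2 z ^ k) * (N r (\<lambda>z. y0 z ^ i) * N r (\<lambda>z. y1 z ^ j))"
      using e r by (simp add: N_mult ent_diff ent_power ent_mult)
    also have "\<dots> \<le> N r (\<lambda>z. x2 z ^ k - y2 z ^ k) * (K ^ i * K ^ j)"
      using NP[OF e(4) K(4), of i] NP[OF e(5) K(5), of j] e r
      by (intro mult_mono N_nonneg ent_diff ent_power ent_mult mult_nonneg_nonneg zero_le_power K0 order_refl) auto
    also have "\<dots> = N r (\<lambda>z. x2 z ^ k - y2 z ^ k) * K ^ (i + j)" by (simp add: power_add)
    also have "\<dots> \<le> dl * K ^ (k + (i + j) - 1)" by (rule N_pow_diff_K[OF e(3,6) r dl(3) K(3,6) K0])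
    finally show ?thesis by (simp add: ac_simps)
  qed
  show ?thesis unfolding eq
    by (rule N_add_le[OF _ _ r N_add_le[OF _ _ r t1 t2] t3]) (intro ent_add ent_mult ent_diff ent_power e)+
qed

end


context NA begin

lemma N_hp_diff:
  fixes x0 x1 x2 y0 y1 y2 :: "'a \<Rightarrow> 'a"
  assumes e: "ent x0" "ent x1" "ent x2" "ent y0" "ent y1" "ent y2" and r: "r > 0"
    and dl: "N r (\<lambda>z. x0 z - y0 z) \<le> dl" "N r (\<lambda>z. x1 z - y1 z) \<le> dl" "N r (\<lambda>z. x2 z - y2 z) \<le> dl"
    and K: "N r x0 \<le> K" "N r x1 \<le> K" "N r x2 \<le> K" "N r y0 \<le> K" "N r y1 \<le> K" "N r y2 \<le> K"
    and K0: "0 \<le> K"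
  shows "N r (\<lambda>z. hp_eval d c (x0 z, x1 z, x2 z) - hp_eval d c (y0 z, y1 z, y2 z))
     \<le> (\<Sum>i\<le>d. \<Sum>j\<le>d-i. v (c i j)) * (dl * K ^ (d - 1))"
proof -
  define Cc where "Cc = (\<Sum>i\<le>d. \<Sum>j\<le>d-i. v (c i j))"
  have dl0: "0 \<le> dl"
  proof -
    have "0 \<le> N r (\<lambda>z. x0 z - y0 z)" using e r by (intro N_nonneg ent_diff) auto
    thus ?thesis using dl by linarith
  qed
  have B0: "0 \<le> Cc * (dl * K ^ (d - 1))" unfolding Cc_def using dl0 K0
    by (intro mult_nonneg_nonneg sum_nonneg) auto
  have cle: "v (c i j) \<le> Cc" if "i \<in> {..d}" "j \<in> {..d-i}" for i j
  proof -
    have "v (c i j) \<le> (\<Sum>j\<le>d-i. v (c i j))" using that by (intro member_le_sum) auto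
    also have "\<dots> \<le> Cc" unfolding Cc_def using that by (intro member_le_sum sum_nonneg) auto
    finally show ?thesis .
  qed
  have eq: "(\<lambda>z. hp_eval d c (x0 z, x1 z, x2 z) - hp_eval d c (y0 z, y1 z, y2 z)) =
     (\<lambda>z. \<Sum>i\<le>d. \<Sum>j\<le>d-i. c i j * (x0 z ^ i * x1 z ^ j * x2 z ^ (d-i-j) - y0 z ^ i * y1 z ^ j * y2 z ^ (d-i-j)))"
    unfolding hp_eval_def prod.case by (simp add: sum_subtractf right_diff_distrib mult.assoc)
  have "N r (\<lambda>z. \<Sum>i\<le>d. \<Sum>j\<le>d-i. c i j * (x0 z ^ i * x1 z ^ j * x2 z ^ (d-i-j) - y0 z ^ i * y1 z ^ j * y2 z ^ (d-i-j)))
      \<le> Cc * (dl * K ^ (d - 1))"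
  proof (rule N_sum_le[OF _ _ B0 r])
    fix i assume i: "i \<in> {..d}"
    show "ent (\<lambda>z. \<Sum>j\<le>d-i. c i j * (x0 z ^ i * x1 z ^ j * x2 z ^ (d-i-j) - y0 z ^ i * y1 z ^ j * y2 z ^ (d-i-j)))"
      by (intro ent_sum ent_mult ent_diff ent_power ent_const e)
    show "N r (\<lambda>z. \<Sum>j\<le>d-i. c i j * (x0 z ^ i * x1 z ^ j * x2 z ^ (d-i-j) - y0 z ^ i * y1 z ^ j * y2 z ^ (d-i-j)))
      \<le> Cc * (dl * K ^ (d - 1))"
    proof (rule N_sum_le[OF _ _ B0 r])
      fix j assume j: "j \<in> {..d-i}"
      show "ent (\<lambda>z. c i j * (x0 z ^ i * x1 z ^ j * x2 z ^ (d-i-j) - y0 z ^ i * y1 z ^ j * y2 z ^ (d-i-j)))"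
        by (intro ent_sum ent_mult ent_diff ent_power ent_const e)
      have "N r (\<lambda>z. c i j * (x0 z ^ i * x1 z ^ j * x2 z ^ (d-i-j) - y0 z ^ i * y1 z ^ j * y2 z ^ (d-i-j)))
          = v (c i j) * N r (\<lambda>z. x0 z ^ i * x1 z ^ j * x2 z ^ (d-i-j) - y0 z ^ i * y1 z ^ j * y2 z ^ (d-i-j))"
        by (rule N_cmult[OF _ r]) (intro ent_mult ent_diff ent_power e)
      also have "\<dots> \<le> Cc * (dl * K ^ (i + j + (d - i - j) - 1))"
        using cle[OF i j] N_mono_diff[OF e r dl K K0, of i j "d-i-j"]
        by (intro mult_mono N_nonneg ent_mult ent_diff ent_power e r) (auto simp: Cc_def intro!: sum_nonneg)
      also have "i + j + (d - i - j) = d" using i j by simp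
      finally show "N r (\<lambda>z. c i j * (x0 z ^ i * x1 z ^ j * x2 z ^ (d-i-j) - y0 z ^ i * y1 z ^ j * y2 z ^ (d-i-j)))
          \<le> Cc * (dl * K ^ (d - 1))" .
    qed
  qed
  thus ?thesis unfolding eq Cc_def .
qed

lemma pair_bound:
  fixes sg tau :: "'a \<Rightarrow> 'a"
  assumes es: "ent sg" and et: "ent tau" and r: "r > 0" and xy: "x \<noteq> y"
    and Lx: "N r (\<lambda>z. tau z - x * sg z) \<le> L" and Ly: "N r (\<lambda>z. tau z - y * sg z) \<le> L"
    and D1: "(1 + v x) / v (y - x) \<le> D" and D0: "1 \<le> D" and L1: "1 \<le> L"
  shows "max 1 (max (N r sg) (N r tau)) \<le> D * L"
proof -
  have vyx: "v (y - x) > 0" using xy by simp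
  have eLx: "ent (\<lambda>z. tau z - x * sg z)" by (intro ent_diff ent_mult ent_const es et)
  have eLy: "ent (\<lambda>z. tau z - y * sg z)" by (intro ent_diff ent_mult ent_const es et)
  have sg_eq: "sg = (\<lambda>z. inverse (y - x) * ((tau z - x * sg z) - (tau z - y * sg z)))"
    using xy by (intro ext) (simp add: field_simps)
  have "N r sg = v (inverse (y - x)) * N r (\<lambda>z. (tau z - x * sg z) - (tau z - y * sg z))"
    by (subst sg_eq) (rule N_cmult[OF ent_diff[OF eLx eLy] r])
  also have "\<dots> \<le> inverse (v (y - x)) * L"
    using N_diff_le[OF eLx eLy r Lx Ly] vyx by (simp add: v_inverse xy)
  finally have Nsg: "N r sg \<le> inverse (v (y - x)) * L" .
  have L0: "0 \<le> L" using L1 by simp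
  have i1: "inverse (v (y - x)) \<le> D"
  proof -
    have "inverse (v (y - x)) = 1 / v (y - x)" by (simp add: inverse_eq_divide)
    also have "\<dots> \<le> (1 + v x) / v (y - x)" using vyx by (intro divide_right_mono) auto
    finally show ?thesis using D1 by linarith
  qed
  have i2: "v x * inverse (v (y - x)) \<le> D"
  proof -
    have "v x * inverse (v (y - x)) = v x / v (y - x)" by (simp add: divide_inverse)
    also have "\<dots> \<le> (1 + v x) / v (y - x)" using vyx by (intro divide_right_mono) auto
    finally show ?thesis using D1 by linarith
  qed
  have Nsg': "N r sg \<le> D * L" using Nsg i1 L0 by (meson mult_right_mono order_trans)
  have tau_eq: "tau = (\<lambda>z. (tau z - x * sg z) + x * sg z)" by simp
  have "N r tau \<le> max (N r (\<lambda>z. tau z - x * sg z)) (N r (\<lambda>z. x * sg z))"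
    by (subst tau_eq) (rule N_add[OF eLx ent_cmult[OF es] r])
  moreover have "N r (\<lambda>z. x * sg z) \<le> D * L"
  proof -
    have "N r (\<lambda>z. x * sg z) = v x * N r sg" by (rule N_cmult[OF es r])
    also have "\<dots> \<le> v x * (inverse (v (y - x)) * L)" using Nsg by (intro mult_left_mono) auto
    also have "\<dots> = (v x * inverse (v (y - x))) * L" by simp
    also have "\<dots> \<le> D * L" using i2 L0 by (intro mult_right_mono) auto
    finally show ?thesis .
  qed
  moreover have "L \<le> D * L" using D0 L0 by (simp add: mult_le_cancel_right1)
  ultimately have "N r tau \<le> D * L" using Lx by linarith
  moreover have "1 \<le> D * L" using L1 \<open>L \<le> D * L\<close> by linarith
  ultimately show ?thesis using Nsg' by simp
qed

lemma N_lin2_le: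
  fixes s t :: "'a \<Rightarrow> 'a"
  assumes es: "ent s" and et: "ent t" and r: "r > 0" and "N r s \<le> M" "N r t \<le> M" "0 \<le> M"
    and "v al \<le> C" "v be \<le> C"
  shows "N r (\<lambda>z. s z * al + t z * be) \<le> C * M"
proof -
  have "N r (\<lambda>z. s z * al) = N r s * v al" using N_mult[OF es ent_const r, of al] N_const[OF r] by simp
  also have "\<dots> \<le> M * C" using assms N_nonneg[OF es r] by (intro mult_mono) auto
  finally have 1: "N r (\<lambda>z. s z * al) \<le> C * M" by (simp add: mult.commute)
  have "N r (\<lambda>z. t z * be) = N r t * v be" using N_mult[OF et ent_const r, of be] N_const[OF r] by simp
  also have "\<dots> \<le> M * C" using assms N_nonneg[OF et r] by (intro mult_mono) auto
  finally have 2: "N r (\<lambda>z. t z * be) \<le> C * M" by (simp add: mult.commute)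
  show ?thesis by (rule N_add_le[OF _ _ r 1 2]) (intro ent_mult ent_const es et)+
qed

lemma N_plus_const_le:
  fixes s :: "'a \<Rightarrow> 'a"
  assumes es: "ent s" and r: "r > 0" and "N r s \<le> B" "v g \<le> B"
  shows "N r (\<lambda>z. s z + g) \<le> B"
  using N_add_le[OF es ent_const r, of B g] assms N_const[OF r] by simp

end


context NAC begin

lemma core:
  fixes c :: "nat \<Rightarrow> nat \<Rightarrow> 'a" and a :: "'a pt" and f0 f1 f2 :: "'a \<Rightarrow> 'a"
  assumes d: "d \<ge> 2" and ns: "nonsingular_curve d c" and a0: "a \<noteq> (0, 0, 0)" and tr: "transversal d c a"
    and nomult: "\<forall>p. mult_d_point d c p \<longrightarrow> pdot a p \<noteq> 0"
    and e0: "ent f0" and e1: "ent f1" and e2: "ent f2"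
    and avoid: "\<forall>z. hp_eval d c (f0 z, f1 z, f2 z) \<noteq> 0 \<and> pdot a (f0 z, f1 z, f2 z) \<noteq> 0"
  shows "(f0 z, f1 z, f2 z) = (f0 z', f1 z', f2 z')"
proof -
  obtain u w e S T xs where b: "basis a u w e S T" and Fw: "hp_eval d c w \<noteq> 0" and len: "length xs = d"
    and dist: "distinct xs" and roots: "\<forall>x\<in>set xs. hp_eval d c (padd u (pscale x w)) = 0"
    and prodf: "\<forall>s t. hp_eval d c (padd (pscale s u) (pscale t w)) = hp_eval d c w * (\<Prod>x\<leftarrow>xs. t - x * s)"
    using curve_structure[OF d ns a0 tr] by blast
  define fv where "fv z = (f0 z, f1 z, f2 z)" for z
  have el: "ent (\<lambda>z. pdot g (fv z))" for g unfolding fv_def by (rule ent_lin[OF e0 e1 e2])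
  obtain l1 where l1: "\<forall>z. pdot a (fv z) = l1"
    using zero_free_const[OF el[of a]] avoid unfolding fv_def by blast
  have eF: "ent (\<lambda>z. hp_eval d c (fv z))" unfolding fv_def by (rule ent_hp[OF e0 e1 e2])
  obtain l2 where l2: "\<forall>z. hp_eval d c (fv z) = l2"
    using zero_free_const[OF eF] avoid unfolding fv_def by blast
  have l2nz: "l2 \<noteq> 0" using l2 avoid unfolding fv_def by metis
  define sg where "sg z = pdot S (fv z)" for z
  define tau where "tau z = pdot T (fv z)" for z
  have esg: "ent sg" unfolding sg_def by (rule el)
  have etau: "ent tau" unfolding tau_def by (rule el)
  have decf: "fv z = padd (padd (pscale (sg z) u) (pscale (tau z) w)) (pscale l1 e)" for z
    using basis_dec[OF b, of "fv z"] l1 unfolding sg_def tau_def by simp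
  define Lam where "Lam x z = tau z - x * sg z" for x z
  have eLam: "ent (Lam x)" for x unfolding Lam_def by (intro ent_diff ent_mult ent_const esg etau)
  have claimA: "\<exists>x0\<in>set xs. \<exists>m. \<forall>z. Lam x0 z = m"
  proof (rule ccontr)
    assume nc: "\<not> ?thesis"
    obtain u0 u1 u2 where u: "u = (u0, u1, u2)" by (cases u)
    obtain w0 w1 w2 where w: "w = (w0, w1, w2)" by (cases w)
    obtain g0 g1 g2 where e: "e = (g0, g1, g2)" by (cases e)
    define q0 where "q0 z = sg z * u0 + tau z * w0" for z
    define q1 where "q1 z = sg z * u1 + tau z * w1" for z
    define q2 where "q2 z = sg z * u2 + tau z * w2" for z
    have fq: "f0 = (\<lambda>z. q0 z + l1 * g0)" "f1 = (\<lambda>z. q1 z + l1 * g1)" "f2 = (\<lambda>z. q2 z + l1 * g2)"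
      using decf unfolding fv_def u w e q0_def q1_def q2_def by (auto simp: algebra_simps fun_eq_iff)
    have eq: "ent q0" "ent q1" "ent q2" unfolding q0_def q1_def q2_def
      by (intro ent_add ent_mult ent_const esg etau)+
    define Cu where "Cu = 1 + (v u0 + v u1 + v u2) + (v w0 + v w1 + v w2) + (v (l1 * g0) + v (l1 * g1) + v (l1 * g2))"
    have Cu1: "1 \<le> Cu" unfolding Cu_def by (simp add: add_nonneg_nonneg)
    have Cub: "v u0 \<le> Cu" "v u1 \<le> Cu" "v u2 \<le> Cu" "v w0 \<le> Cu" "v w1 \<le> Cu" "v w2 \<le> Cu"
      "v (l1 * g0) \<le> Cu" "v (l1 * g1) \<le> Cu" "v (l1 * g2) \<le> Cu"
      unfolding Cu_def by (simp_all add: add_nonneg_nonneg)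
    define Cc where "Cc = (\<Sum>i\<le>d. \<Sum>j\<le>d-i. v (c i j))"
    have Cc0: "0 \<le> Cc" unfolding Cc_def by (intro sum_nonneg) auto
    define C5 where "C5 = v l2 + Cc * Cu * Cu ^ (d - 1)"
    define X where "X = set xs"
    have cardX: "card X = d" unfolding X_def using dist len by (simp add: distinct_card)
    have finX: "finite X" unfolding X_def by simp
    define D where "D = 1 + (\<Sum>x\<in>X. \<Sum>y\<in>X. if y = x then 0 else (1 + v x) / v (y - x))"
    have Dsum0: "0 \<le> (\<Sum>x\<in>X. \<Sum>y\<in>X. if y = x then 0 else (1 + v x) / v (y - x))"
      by (intro sum_nonneg) auto
    have D1: "1 \<le> D" unfolding D_def using Dsum0 by linarith
    have Dxy: "(1 + v x) / v (y - x) \<le> D" if "x \<in> X" "y \<in> X" "y \<noteq> x" for x y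
    proof -
      have "(1 + v x) / v (y - x) = (if y = x then 0 else (1 + v x) / v (y - x))" using that by simp
      also have "\<dots> \<le> (\<Sum>y\<in>X. if y = x then 0 else (1 + v x) / v (y - x))"
        using that finX by (intro member_le_sum) auto
      also have "\<dots> \<le> (\<Sum>x\<in>X. \<Sum>y\<in>X. if y = x then 0 else (1 + v x) / v (y - x))"
        using that finX by (intro member_le_sum sum_nonneg) auto
      finally show ?thesis unfolding D_def by linarith
    qed
    define vF where "vF = v (hp_eval d c w)"
    have vF: "vF > 0" unfolding vF_def using Fw by simp
    define B0 where "B0 = max 1 (C5 * D ^ (d - 1) / vF)"
    have big: "\<forall>x\<in>X. \<exists>R>0. \<forall>r\<ge>R. N r (Lam x) > B0"
    proof
      fix x assume "x \<in> X"
      hence "\<not> (\<exists>m. \<forall>z. Lam x z = m)" using nc unfolding X_def by blast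
      thus "\<exists>R>0. \<forall>r\<ge>R. N r (Lam x) > B0" by (rule nonconst_big[OF eLam])
    qed
    then obtain Rf where Rf: "\<forall>x\<in>X. Rf x > 0 \<and> (\<forall>r\<ge>Rf x. N r (Lam x) > B0)" by metis
    define r where "r = 1 + (\<Sum>x\<in>X. Rf x)"
    have Rs0: "0 \<le> (\<Sum>x\<in>X. Rf x)" using Rf by (intro sum_nonneg) (auto intro: less_imp_le)
    have r0: "r > 0" unfolding r_def using Rs0 by linarith
    have rge: "Rf x \<le> r" if "x \<in> X" for x
    proof -
      have "Rf x \<le> (\<Sum>x\<in>X. Rf x)" using that finX Rf by (intro member_le_sum) (auto intro: less_imp_le)
      thus ?thesis unfolding r_def by linarith
    qed
    have NL: "N r (Lam x) > B0" if "x \<in> X" for x using Rf rge[OF that] that by blast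
    define M where "M = max 1 (max (N r sg) (N r tau))"
    have M1: "1 \<le> M" unfolding M_def by simp
    have Msg: "N r sg \<le> M" and Mtau: "N r tau \<le> M" unfolding M_def by auto
    have M0: "0 \<le> M" using M1 by simp
    have Nq: "N r q0 \<le> Cu * M" "N r q1 \<le> Cu * M" "N r q2 \<le> Cu * M"
      unfolding q0_def q1_def q2_def using Cub
      by (intro N_lin2_le[OF esg etau r0 Msg Mtau M0]; simp)+
    have CuM: "Cu \<le> Cu * M" using Cu1 M1 by (simp add: mult_le_cancel_left1)
    have Nf: "N r f0 \<le> Cu * M" "N r f1 \<le> Cu * M" "N r f2 \<le> Cu * M"
      unfolding fq using Nq Cub CuM by (intro N_plus_const_le[OF _ r0] eq; linarith)+
    have Ndf: "N r (\<lambda>z. f0 z - q0 z) \<le> Cu" "N r (\<lambda>z. f1 z - q1 z) \<le> Cu" "N r (\<lambda>z. f2 z - q2 z) \<le> Cu"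
      unfolding fq using Cub N_const[OF r0] by simp_all
    define Fq where "Fq z = hp_eval d c (q0 z, q1 z, q2 z)" for z
    have eFq: "ent Fq" unfolding Fq_def by (rule ent_hp[OF eq])
    have diff: "N r (\<lambda>z. hp_eval d c (f0 z, f1 z, f2 z) - Fq z) \<le> Cc * (Cu * (Cu * M) ^ (d - 1))"
      unfolding Fq_def Cc_def
      by (rule N_hp_diff[OF e0 e1 e2 eq r0 Ndf Nf Nq]) (use Cu1 M1 in simp)
    have NFq: "N r Fq \<le> C5 * M ^ (d - 1)"
    proof -
      have Fq_eq: "Fq = (\<lambda>z. l2 - (hp_eval d c (f0 z, f1 z, f2 z) - Fq z))"
        using l2 unfolding fv_def by auto
      have Mp: "1 \<le> M ^ (d - 1)" using M1 by simp
      have 1: "N r (\<lambda>z. l2) \<le> C5 * M ^ (d - 1)"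
      proof -
        have "N r (\<lambda>z. l2) = v l2" by (rule N_const[OF r0])
        also have "\<dots> \<le> v l2 * M ^ (d - 1)" using mult_left_mono[OF Mp v_nonneg[of l2]] by simp
        also have "\<dots> \<le> C5 * M ^ (d - 1)" unfolding C5_def using Mp Cc0 Cu1
          by (intro mult_right_mono) auto
        finally show ?thesis .
      qed
      have 2: "N r (\<lambda>z. hp_eval d c (f0 z, f1 z, f2 z) - Fq z) \<le> C5 * M ^ (d - 1)"
      proof -
        have "Cc * (Cu * (Cu * M) ^ (d - 1)) = (Cc * Cu * Cu ^ (d - 1)) * M ^ (d - 1)"
          by (simp add: power_mult_distrib)
        also have "\<dots> \<le> C5 * M ^ (d - 1)" unfolding C5_def using M0 by (intro mult_right_mono) auto
        finally show ?thesis using diff by linarith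
      qed
      have "N r (\<lambda>z. l2 - (hp_eval d c (f0 z, f1 z, f2 z) - Fq z)) \<le> C5 * M ^ (d - 1)"
        by (rule N_diff_le[OF ent_const _ r0 1 2]) (intro ent_diff eFq ent_hp e0 e1 e2)
      thus ?thesis using Fq_eq by metis
    qed
    have Fq_prod: "Fq = (\<lambda>z. hp_eval d c w * (\<Prod>x\<in>X. Lam x z))"
    proof
      fix z
      have "(q0 z, q1 z, q2 z) = padd (pscale (sg z) u) (pscale (tau z) w)"
        unfolding q0_def q1_def q2_def u w by (simp add: algebra_simps)
      hence "Fq z = hp_eval d c w * (\<Prod>x\<leftarrow>xs. tau z - x * sg z)" unfolding Fq_def using prodf by simp
      also have "(\<Prod>x\<leftarrow>xs. tau z - x * sg z) = (\<Prod>x\<in>X. Lam x z)"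
        unfolding X_def Lam_def using dist by (simp add: prod.distinct_set_conv_list)
      finally show "Fq z = hp_eval d c w * (\<Prod>x\<in>X. Lam x z)" .
    qed
    have NFq_eq: "N r Fq = vF * (\<Prod>x\<in>X. N r (Lam x))"
    proof -
      have "N r Fq = vF * N r (\<lambda>z. \<Prod>x\<in>X. Lam x z)"
        unfolding Fq_prod vF_def by (rule N_cmult[OF ent_prod r0]) (rule eLam)
      also have "N r (\<lambda>z. \<Prod>x\<in>X. Lam x z) = (\<Prod>x\<in>X. N r (Lam x))" by (rule N_prod[OF eLam r0])
      finally show ?thesis .
    qed
    have Xne: "X \<noteq> {}" using cardX d by auto
    obtain i0 where i0: "i0 \<in> X" "\<forall>y\<in>X. N r (Lam i0) \<le> N r (Lam y)"
    proof -
      have fin: "finite ((\<lambda>x. N r (Lam x)) ` X)" "(\<lambda>x. N r (Lam x)) ` X \<noteq> {}" using finX Xne by auto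
      obtain i where "i \<in> X" "N r (Lam i) = Min ((\<lambda>x. N r (Lam x)) ` X)" using Min_in[OF fin] by auto
      moreover have "\<forall>y\<in>X. Min ((\<lambda>x. N r (Lam x)) ` X) \<le> N r (Lam y)" using Min_le[OF fin(1)] by auto
      ultimately show ?thesis using that by auto
    qed
    have B01: "1 \<le> B0" unfolding B0_def by simp
    have others: "M / D \<le> N r (Lam y)" if "y \<in> X - {i0}" for y
    proof -
      have y: "y \<in> X" "y \<noteq> i0" using that by auto
      have L1: "1 \<le> N r (Lam y)" using NL[OF y(1)] B01 by linarith
      have "M \<le> D * N r (Lam y)"
        unfolding M_def
        by (rule pair_bound[OF esg etau r0 y(2)[symmetric], unfolded Lam_def[symmetric]])
           (use i0 y Dxy[OF i0(1) y(1) y(2)] D1 L1 in auto)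
      thus ?thesis using D1 by (simp add: divide_le_eq mult.commute)
    qed
    have card_rest: "card (X - {i0}) = d - 1" using cardX i0(1) finX by simp
    have MD0: "0 \<le> M / D" using M0 D1 by simp
    have "N r (Lam i0) * (M / D) ^ (d - 1) \<le> N r (Lam i0) * (\<Prod>y\<in>X - {i0}. N r (Lam y))"
    proof -
      have "(M / D) ^ (d - 1) = (\<Prod>y\<in>X - {i0}. M / D)" using card_rest by simp
      also have "\<dots> \<le> (\<Prod>y\<in>X - {i0}. N r (Lam y))" using others MD0 by (intro prod_mono) auto
      finally show ?thesis using N_nonneg[OF eLam r0] by (intro mult_left_mono) auto
    qed
    also have "\<dots> = (\<Prod>x\<in>X. N r (Lam x))" using finX i0(1) by (simp add: prod.remove)
    finally have pl: "N r (Lam i0) * (M / D) ^ (d - 1) \<le> (\<Prod>x\<in>X. N r (Lam x))" .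
    have "vF * (N r (Lam i0) * (M / D) ^ (d - 1)) \<le> C5 * M ^ (d - 1)"
      using pl NFq NFq_eq vF by (smt (verit) mult_left_mono)
    note h = this
    have Dp: "D ^ (d - 1) > 0" using D1 by simp
    have Mp: "M ^ (d - 1) > 0" using M1 by simp
    have "(vF * N r (Lam i0)) * M ^ (d - 1) = (vF * (N r (Lam i0) * (M / D) ^ (d - 1))) * D ^ (d - 1)"
      using Dp D1 by (simp add: power_divide field_simps)
    also have "\<dots> \<le> (C5 * M ^ (d - 1)) * D ^ (d - 1)" using h Dp by (intro mult_right_mono) auto
    also have "\<dots> = (C5 * D ^ (d - 1)) * M ^ (d - 1)" by simp
    finally have "(vF * N r (Lam i0)) * M ^ (d - 1) \<le> (C5 * D ^ (d - 1)) * M ^ (d - 1)" .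
    hence "vF * N r (Lam i0) \<le> C5 * D ^ (d - 1)" using Mp by (simp add: mult_le_cancel_right_pos)
    hence "N r (Lam i0) \<le> C5 * D ^ (d - 1) / vF" using vF by (simp add: field_simps)
    moreover have "C5 * D ^ (d - 1) / vF \<le> B0" unfolding B0_def by simp
    ultimately show False using NL[OF i0(1)] by linarith
  qed
  then obtain x0 m where x0: "x0 \<in> set xs" and m: "\<forall>z. Lam x0 z = m" by blast
  define P where "P = padd u (pscale x0 w)"
  define Q0 where "Q0 = padd (pscale m w) (pscale l1 e)"
  have fvP: "fv z = padd Q0 (pscale (sg z) P)" for z
  proof -
    have t: "tau z = m + x0 * sg z" using m unfolding Lam_def by (metis diff_add_cancel add.commute)
    show ?thesis unfolding decf[of z] t P_def Q0_def by (cases u; cases w; cases e) (simp add: algebra_simps)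
  qed
  have FP: "hp_eval d c P = 0" using roots x0 unfolding P_def by blast
  have aP: "pdot a P = 0" unfolding P_def using basis_perp[OF b, of 1 x0] by simp
  have Pnz: "P \<noteq> (0, 0, 0)" unfolding P_def by (rule basis_nz[OF b])
  define G where "G = hpoly d c Q0 P"
  have polyG: "poly G (sg z) = l2" for z
    unfolding G_def poly_hpoly using l2 fvP by metis
  show ?thesis
  proof (cases "G = [:l2:]")
    case True
    have allv: "hp_eval d c (padd Q0 (pscale y P)) = l2" for y
      using True poly_hpoly[of d c Q0 P y] unfolding G_def by simp
    have FQ0: "hp_eval d c Q0 = l2" using allv[of 0] by simp
    have hom: "hp_eval d c (padd (pscale x P) (pscale y Q0)) = y ^ d * hp_eval d c Q0" for x y
    proof (cases "y = 0")
      case True thus ?thesis using FP d by (simp add: hp_eval_scale power_0_left)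
    next
      case False
      have "padd (pscale x P) (pscale y Q0) = pscale y (padd Q0 (pscale (x / y) P))"
        using False by (cases P; cases Q0) (simp add: field_simps)
      thus ?thesis using allv FQ0 by (simp add: hp_eval_scale)
    qed
    have "hpoly d c P Q0 = monom l2 d"
    proof (rule poly_ext)
      fix t
      have "padd P (pscale t Q0) = padd (pscale 1 P) (pscale t Q0)" by simp
      thus "poly (hpoly d c P Q0) t = poly (monom l2 d) t"
        using hom[of 1 t] FQ0 by (simp add: poly_hpoly poly_monom mult.commute)
    qed
    hence "coeff (hpoly d c P Q0) 1 = 0" using d by (simp add: coeff_monom)
    hence gQ: "pdot (hp_grad d c P) Q0 = 0" by (simp only: coeff_hpoly_1)
    have "mult_d_point d c P" unfolding mult_d_point_def
      using Pnz FP gQ FQ0 l2nz hom by blast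
    thus ?thesis using nomult aP by blast
  next
    case False
    define H where "H = G - [:l2:]"
    have Hnz: "H \<noteq> 0" using False unfolding H_def by simp
    have finH: "finite {y. poly H y = 0}" by (rule poly_roots_finite[OF Hnz])
    have "UNIV \<noteq> {y. poly H y = 0}" using finH infinite_UNIV_field by auto
    then obtain y0 where y0: "poly H y0 \<noteq> 0" by auto
    have nzs: "\<forall>z. sg z - y0 \<noteq> 0"
    proof (intro allI notI)
      fix z assume "sg z - y0 = 0"
      hence "sg z = y0" by simp
      hence "poly H y0 = 0" using polyG[of z] unfolding H_def by simp
      thus False using y0 by simp
    qed
    obtain k where k: "\<forall>z. sg z - y0 = k" using zero_free_const[OF ent_diff[OF esg ent_const] nzs] by blast
    have "sg z = sg z'" using k by (metis diff_add_cancel)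
    hence "fv z = fv z'" using fvP by simp
    thus ?thesis unfolding fv_def .
  qed
qed

end


theorem corollary2p4:
  fixes v :: "'a::field \<Rightarrow> real"
    and d :: nat and c :: "nat \<Rightarrow> nat \<Rightarrow> 'a" and a :: "'a pt"
  assumes "alg_closed_field TYPE('a)"
    and "nonarch_abs v"
    and "v_complete v"
    and "d \<ge> 3"
    and "nonsingular_curve d c"
    and "a \<noteq> (0,0,0)"
    and "transversal d c a"
    and "\<forall>p. mult_d_point d c p \<longrightarrow> pdot a p \<noteq> 0"
  shows "brody_hyperbolic_complement v d c a"
proof -
  interpret NAC v using assms(1-3) by unfold_locales auto
  show ?thesis
    unfolding brody_hyperbolic_complement_def
  proof (intro allI impI)
    fix f0 f1 f2 :: "'a \<Rightarrow> 'a" and z w :: 'a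
    assume e0: "entire v f0" and e1: "entire v f1" and e2: "entire v f2"
      and nz: "\<forall>z. (f0 z, f1 z, f2 z) \<noteq> (0, 0, 0)"
      and av: "\<forall>z. hp_eval d c (f0 z, f1 z, f2 z) \<noteq> 0 \<and> pdot a (f0 z, f1 z, f2 z) \<noteq> 0"
    have d2: "d \<ge> 2" using assms(4) by simp
    have "(f0 z, f1 z, f2 z) = (f0 w, f1 w, f2 w)"
      by (rule core[OF d2 assms(5,6,7,8) e0[unfolded entire_iff_ent] e1[unfolded entire_iff_ent]
            e2[unfolded entire_iff_ent] av])
    thus "proportional (f0 z, f1 z, f2 z) (f0 w, f1 w, f2 w)"
      unfolding proportional_def by (intro exI[of _ 1]) simp
  qed
qed


end
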